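(* Let $G$ be a positively $0$-transitive Lie superalgebra such that $G_+$ is generated by $G_1$. Let $U$ be the universal Lie superalgebra associated to $U_1:=G_1$, let $D_{2+}\subseteq U_{2+}$ be the kernel of the canonical surjective Lie superalgebra morphism $U_+\to G_+$ restricting to the identity on $U_1$, and let $N=\{x\in U:[x,d]\in D_{2+}\text{ for all }d\in D_{2+}\}$ be the idealiser of $D_{2+}$ in $U$. Then there is an injective Lie superalgebra morphism from $G$ into the prolongation $N/D_{2+}$ of $G_+$.
   Context: All vector spaces are over $\mathbb{K}=\mathbb{R}$ or $\mathbb{C}$, $\mathbb{Z}$-graded, parity equal to degree mod 2; morphisms preserve degree. A Lie superalgebra is a graded space with degree-preserving bracket satisfying graded antisymmetry and graded Jacobi. $G_\pm=\bigoplus_{k\ge1}G_{\pm k}$, $G_{0-}=\bigoplus_{k\le0}G_k$, $U_{2+}=\bigoplus_{k\ge2}U_k$. $G$ is positively $0$-transitive if for $x\in G_{0-}$, $[G_+,x]=0$ implies $x=0$. Universal Lie superalgebra: for $U_1$ concentrated in degree 1 (odd), put $U_0=\mathrm{End}(U_1)$, $U_{-p+1}=\mathrm{Hom}(U_1,U_{-p+2})$ for $p\ge2$; on $U_{1-}=\bigoplus_{k\le1}U_k$ define brackets recursively by $[x,u]=x(u)$, $[u,x]=-(-1)^{|x|}x(u)$, $[x,y](u)=[x,y(u)]+(-1)^{|y|}[x(u),y]$ ($x,y\in U_{0-}$, $u\in U_1$), giving a semilocal Lie superalgebra; $U$ is the unique Lie superalgebra extending it such that $U_+$ is the free Lie superalgebra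 generated by $U_1$. *)

theory Defs
  imports Main
begin

text \<open>A (possibly infinite-dimensional) Z-graded vector space over the field 'k,
  given by a carrier with its own operations and a grading int => subspace.
  Parity of an element of degree k is k mod 2.\<close>

record ('k, 'a) lsa =
  carrier :: "'a set"
  add :: "'a \<Rightarrow> 'a \<Rightarrow> 'a"
  zero :: "'a"
  scal :: "'k \<Rightarrow> 'a \<Rightarrow> 'a"
  brk :: "'a \<Rightarrow> 'a \<Rightarrow> 'a"
  grd :: "int \<Rightarrow> 'a set"

definition vs :: "('k::field, 'a, 'b) lsa_scheme \<Rightarrow> bool" where
  "vs L \<longleftrightarrow>
     zero L \<in> carrier L \<and>
     (\<forall>x\<in>carrier L. \<forall>y\<in>carrier L. add L x y \<in> carrier L) \<and>
     (\<forall>c. \<forall>x\<in>carrier L. scal L c x \<in> carrier L) \<and>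
     (\<forall>x\<in>carrier L. \<forall>y\<in>carrier L. \<forall>z\<in>carrier L. add L (add L x y) z = add L x (add L y z)) \<and>
     (\<forall>x\<in>carrier L. \<forall>y\<in>carrier L. add L x y = add L y x) \<and>
     (\<forall>x\<in>carrier L. add L (zero L) x = x) \<and>
     (\<forall>x\<in>carrier L. \<exists>y\<in>carrier L. add L x y = zero L) \<and>
     (\<forall>c. \<forall>x\<in>carrier L. \<forall>y\<in>carrier L. scal L c (add L x y) = add L (scal L c x) (scal L c y)) \<and>
     (\<forall>c d. \<forall>x\<in>carrier L. scal L (c + d) x = add L (scal L c x) (scal L d x)) \<and>
     (\<forall>c d. \<forall>x\<in>carrier L. scal L (c * d) x = scal L c (scal L d x)) \<and>
     (\<forall>x\<in>carrier L. scal L 1 x = x)"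

definition subspace :: "('k, 'a, 'b) lsa_scheme \<Rightarrow> 'a set \<Rightarrow> bool" where
  "subspace L S \<longleftrightarrow> S \<subseteq> carrier L \<and> zero L \<in> S \<and>
     (\<forall>x\<in>S. \<forall>y\<in>S. add L x y \<in> S) \<and> (\<forall>c. \<forall>x\<in>S. scal L c x \<in> S)"

definition span :: "('k, 'a, 'b) lsa_scheme \<Rightarrow> 'a set \<Rightarrow> 'a set" where
  "span L X = \<Inter>{S. subspace L S \<and> X \<subseteq> S}"

definition lie_gen :: "('k, 'a, 'b) lsa_scheme \<Rightarrow> 'a set \<Rightarrow> 'a set" where
  "lie_gen L X = \<Inter>{S. subspace L S \<and> X \<subseteq> S \<and> (\<forall>a\<in>S. \<forall>b\<in>S. brk L a b \<in> S)}"

definition hsum :: "('k, 'a, 'b) lsa_scheme \<Rightarrow> int list \<Rightarrow> (int \<Rightarrow> 'a) \<Rightarrow> 'a" where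
  "hsum L ks c = foldr (\<lambda>k acc. add L (c k) acc) ks (zero L)"

text \<open>The carrier is the (internal) direct sum of the subspaces grd L k.\<close>
definition graded :: "('k, 'a, 'b) lsa_scheme \<Rightarrow> bool" where
  "graded L \<longleftrightarrow>
     (\<forall>k. subspace L (grd L k)) \<and>
     carrier L = {hsum L ks c | ks c. \<forall>k\<in>set ks. c k \<in> grd L k} \<and>
     (\<forall>ks c. distinct ks \<and> (\<forall>k\<in>set ks. c k \<in> grd L k) \<and> hsum L ks c = zero L
        \<longrightarrow> (\<forall>k\<in>set ks. c k = zero L))"

text \<open>(-1)^(|x||y|) for homogeneous x, y of degrees i, j (parity = degree mod 2).\<close>
definition ssign :: "int \<Rightarrow> int \<Rightarrow> 'k::field" where
  "ssign i j = (if odd i \<and> odd j then -1 else 1)"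

definition lie_superalgebra :: "('k::field, 'a, 'b) lsa_scheme \<Rightarrow> bool" where
  "lie_superalgebra L \<longleftrightarrow> vs L \<and> graded L \<and>
     (\<forall>x\<in>carrier L. \<forall>y\<in>carrier L. brk L x y \<in> carrier L) \<and>
     (\<forall>x\<in>carrier L. \<forall>y\<in>carrier L. \<forall>z\<in>carrier L.
        brk L (add L x y) z = add L (brk L x z) (brk L y z) \<and>
        brk L z (add L x y) = add L (brk L z x) (brk L z y)) \<and>
     (\<forall>c. \<forall>x\<in>carrier L. \<forall>y\<in>carrier L.
        brk L (scal L c x) y = scal L c (brk L x y) \<and>
        brk L x (scal L c y) = scal L c (brk L x y)) \<and>
     (\<forall>i j. \<forall>x\<in>grd L i. \<forall>y\<in>grd L j. brk L x y \<in> grd L (i + j)) \<and>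
     (\<forall>i j. \<forall>x\<in>grd L i. \<forall>y\<in>grd L j.
        brk L x y = scal L (- ssign i j) (brk L y x)) \<and>
     (\<forall>i j. \<forall>x\<in>grd L i. \<forall>y\<in>grd L j. \<forall>z\<in>carrier L.
        brk L x (brk L y z) = add L (brk L (brk L x y) z) (scal L (ssign i j) (brk L y (brk L x z))))"

definition lin_map :: "('k, 'a, 'b) lsa_scheme \<Rightarrow> ('k, 'c, 'd) lsa_scheme \<Rightarrow> 'a set \<Rightarrow> 'c set
    \<Rightarrow> ('a \<Rightarrow> 'c) \<Rightarrow> bool" where
  "lin_map L M X Y f \<longleftrightarrow> (\<forall>x\<in>X. f x \<in> Y) \<and>
     (\<forall>x\<in>X. \<forall>y\<in>X. f (add L x y) = add M (f x) (f y)) \<and>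
     (\<forall>c. \<forall>x\<in>X. f (scal L c x) = scal M c (f x))"

definition lsa_hom :: "('k, 'a, 'b) lsa_scheme \<Rightarrow> ('k, 'c, 'd) lsa_scheme \<Rightarrow> ('a \<Rightarrow> 'c) \<Rightarrow> bool" where
  "lsa_hom L M f \<longleftrightarrow> lin_map L M (carrier L) (carrier M) f \<and>
     (\<forall>k. \<forall>x\<in>grd L k. f x \<in> grd M k) \<and>
     (\<forall>x\<in>carrier L. \<forall>y\<in>carrier L. f (brk L x y) = brk M (f x) (f y))"

definition pos_part :: "('k, 'a) lsa \<Rightarrow> ('k, 'a) lsa" where
  "pos_part L = L\<lparr>carrier := span L (\<Union>k\<in>{1..}. grd L k),
                   grd := (\<lambda>k. if 1 \<le> k then grd L k else {zero L})\<rparr>"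

definition nonpos_part :: "('k, 'a) lsa \<Rightarrow> 'a set" where
  "nonpos_part L = span L (\<Union>k\<in>{..0}. grd L k)"

definition pos_0_transitive :: "('k, 'a) lsa \<Rightarrow> bool" where
  "pos_0_transitive L \<longleftrightarrow>
     (\<forall>x\<in>nonpos_part L. (\<forall>y\<in>carrier (pos_part L). brk L y x = zero L) \<longrightarrow> x = zero L)"

text \<open>The targets are
  taken with carriers in the type of U; this suffices.\<close>
definition free_pos_part :: "('k::field, 'a) lsa \<Rightarrow> bool" where
  "free_pos_part U \<longleftrightarrow>
     (\<forall>(M :: ('k, 'a) lsa) f. lie_superalgebra M \<and> lin_map U M (grd U 1) (grd M 1) f \<longrightarrow>
        (\<exists>\<phi>. lsa_hom (pos_part U) M \<phi> \<and> (\<forall>u\<in>grd U 1. \<phi> u = f u)) \<and>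
        (\<forall>\<phi> \<psi>. lsa_hom (pos_part U) M \<phi> \<and> (\<forall>u\<in>grd U 1. \<phi> u = f u) \<and>
                 lsa_hom (pos_part U) M \<psi> \<and> (\<forall>u\<in>grd U 1. \<psi> u = f u)
                 \<longrightarrow> (\<forall>x\<in>carrier (pos_part U). \<phi> x = \<psi> x)))"

text \<open>The universal Lie superalgebra on U_1: U_0 = End(U_1), U_{k} = Hom(U_1, U_{k+1})
  for k <= 0 with [x,u] = x(u), i.e. x |-> [x,-] restricted to U_1 is a bijection
  U_k -> Hom(U_1, U_{k+1}); and U_+ is free on U_1.\<close>
definition universal_lsa :: "('k::field, 'a) lsa \<Rightarrow> bool" where
  "universal_lsa U \<longleftrightarrow> lie_superalgebra U \<and>
     (\<forall>k\<le>0. \<forall>f. lin_map U U (grd U 1) (grd U (k + 1)) f \<longrightarrow>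
        (\<exists>!x. x \<in> grd U k \<and> (\<forall>u\<in>grd U 1. brk U x u = f u))) \<and>
     free_pos_part U"

definition coset :: "('k, 'a) lsa \<Rightarrow> 'a set \<Rightarrow> 'a \<Rightarrow> 'a set" where
  "coset U D a = {add U a d | d. d \<in> D}"

definition quot :: "('k, 'a) lsa \<Rightarrow> 'a set \<Rightarrow> 'a set \<Rightarrow> ('k, 'a set) lsa" where
  "quot U N D =
     \<lparr>carrier = coset U D ` N,
      add = (\<lambda>A B. coset U D (add U (SOME a. a \<in> A) (SOME b. b \<in> B))),
      zero = D,
      scal = (\<lambda>c A. coset U D (scal U c (SOME a. a \<in> A))),
      brk = (\<lambda>A B. coset U D (brk U (SOME a. a \<in> A) (SOME b. b \<in> B))),
      grd = (\<lambda>k. coset U D ` (N \<inter> grd U k))\<rparr>"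

definition idealiser :: "('k, 'a) lsa \<Rightarrow> 'a set \<Rightarrow> 'a set" where
  "idealiser U D = {x \<in> carrier U. \<forall>d\<in>D. brk U x d \<in> D}"

end

theory Submission
  imports "HOL-Algebra.FiniteProduct" Defs
begin

definition AG :: "('k, 'a, 'b) lsa_scheme \<Rightarrow> 'a monoid" where
 "AG L = \<lparr>partial_object.carrier = lsa.carrier L, mult = add L, one = zero L\<rparr>"

lemma AG_simps[simp]: "partial_object.carrier (AG L) = carrier L" "monoid.mult (AG L) = add L"
  "monoid.one (AG L) = zero L"
  by (simp_all add: AG_def)

definition fs :: "('k, 'a, 'b) lsa_scheme \<Rightarrow> ('i \<Rightarrow> 'a) \<Rightarrow> 'i set \<Rightarrow> 'a" where
  "fs L f S = finprod (AG L) f S"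

definition neg :: "('k::field, 'a, 'b) lsa_scheme \<Rightarrow> 'a \<Rightarrow> 'a" where "neg L x = scal L (-1) x"

locale vsp = fixes L :: "('k::field, 'a, 'b) lsa_scheme" assumes vsL: "vs L"
begin

lemma zero_c[simp]: "zero L \<in> carrier L" using vsL unfolding vs_def by metis
lemma add_c[simp]: "x \<in> carrier L \<Longrightarrow> y \<in> carrier L \<Longrightarrow> add L x y \<in> carrier L"
  using vsL unfolding vs_def by metis
lemma scal_c[simp]: "x \<in> carrier L \<Longrightarrow> scal L c x \<in> carrier L"
  using vsL unfolding vs_def by metis
lemma neg_c[simp]: "x \<in> carrier L \<Longrightarrow> neg L x \<in> carrier L"
  by (simp add: neg_def)
lemma add_assoc: "x \<in> carrier L \<Longrightarrow> y \<in> carrier L \<Longrightarrow> z \<in> carrier L \<Longrightarrow>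
   add L (add L x y) z = add L x (add L y z)"
  using vsL unfolding vs_def by metis
lemma add_comm: "x \<in> carrier L \<Longrightarrow> y \<in> carrier L \<Longrightarrow> add L x y = add L y x"
  using vsL unfolding vs_def by metis
lemma add_zl[simp]: "x \<in> carrier L \<Longrightarrow> add L (zero L) x = x"
  using vsL unfolding vs_def by metis
lemma add_zr[simp]: "x \<in> carrier L \<Longrightarrow> add L x (zero L) = x"
  using add_comm add_zl zero_c by metis
lemma scal_add_r: "x \<in> carrier L \<Longrightarrow> y \<in> carrier L \<Longrightarrow>
   scal L c (add L x y) = add L (scal L c x) (scal L c y)"
  using vsL unfolding vs_def by metis
lemma scal_add_l: "x \<in> carrier L \<Longrightarrow> scal L (c + d) x = add L (scal L c x) (scal L d x)"
  using vsL unfolding vs_def by metis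
lemma scal_scal: "x \<in> carrier L \<Longrightarrow> scal L c (scal L d x) = scal L (c * d) x"
  using vsL unfolding vs_def by metis
lemma scal_one[simp]: "x \<in> carrier L \<Longrightarrow> scal L 1 x = x"
  using vsL unfolding vs_def by metis
lemma inv_ex: "x \<in> carrier L \<Longrightarrow> \<exists>y\<in>carrier L. add L x y = zero L"
  using vsL unfolding vs_def by metis

lemma add_cancel_l: assumes "a \<in> carrier L" "b \<in> carrier L" "c \<in> carrier L" "add L a b = add L a c"
  shows "b = c"
proof -
  obtain y where y: "y \<in> carrier L" "add L a y = zero L" using inv_ex assms(1) by blast
  have "add L y (add L a b) = add L y (add L a c)" using assms by simp
  then show ?thesis using assms y
    by (metis add_assoc add_comm add_zl)
qed

lemma scal_zero_l[simp]: assumes "x \<in> carrier L" shows "scal L 0 x = zero L"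
proof -
  have "add L (scal L 0 x) (scal L 0 x) = add L (scal L 0 x) (zero L)"
    using scal_add_l[OF assms, of 0 0] assms by simp
  then show ?thesis using add_cancel_l assms by (metis scal_c zero_c)
qed

lemma scal_zero_r[simp]: "scal L c (zero L) = zero L"
proof -
  have "add L (scal L c (zero L)) (scal L c (zero L)) = add L (scal L c (zero L)) (zero L)"
    using scal_add_r[of "zero L" "zero L" c] by simp
  then show ?thesis using add_cancel_l by (metis scal_c zero_c)
qed

lemma add_neg: assumes "x \<in> carrier L" shows "add L x (neg L x) = zero L"
proof -
  have "add L x (neg L x) = add L (scal L 1 x) (scal L (-1) x)" using assms by (simp add: neg_def)
  also have "\<dots> = scal L (1 + -1) x" by (rule sym, rule scal_add_l[OF assms])
  also have "\<dots> = scal L 0 x" by simp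
  finally show ?thesis using assms by simp
qed

lemma add_neg_eq_zero: assumes "x \<in> carrier L" "y \<in> carrier L" "add L x (neg L y) = zero L"
  shows "x = y"
proof -
  have "add L (add L x (neg L y)) y = y" using assms by simp
  then show ?thesis using assms add_neg by (metis add_assoc add_comm add_zr neg_c)
qed

lemma eq_add_neg: assumes "x \<in> carrier L" "y \<in> carrier L" "z \<in> carrier L" "add L x y = z"
  shows "x = add L z (neg L y)"
  using assms add_neg by (metis add_assoc add_c add_zr neg_c)

lemma neg_add: assumes "x \<in> carrier L" "y \<in> carrier L"
  shows "neg L (add L x y) = add L (neg L x) (neg L y)"
  using assms by (simp add: neg_def scal_add_r)

lemma neg_zero[simp]: "neg L (zero L) = zero L" by (simp add: neg_def)

lemma neg_neg[simp]: "x \<in> carrier L \<Longrightarrow> neg L (neg L x) = x"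
  by (simp add: neg_def scal_scal)

lemma comm_monoid_AG: "comm_monoid (AG L)"
proof (rule comm_monoidI)
  fix x y assume "x \<in> partial_object.carrier (AG L)" "y \<in> partial_object.carrier (AG L)"
  then show "x \<otimes>\<^bsub>AG L\<^esub> y = y \<otimes>\<^bsub>AG L\<^esub> x" using add_comm by simp
qed (auto simp: add_assoc)

sublocale A: comm_monoid "AG L" by (rule comm_monoid_AG)

lemma fs_c[simp]: "(\<And>i. i \<in> S \<Longrightarrow> f i \<in> carrier L) \<Longrightarrow> fs L f S \<in> carrier L"
  unfolding fs_def using A.finprod_closed[of f S] by (auto simp: Pi_def)

lemma fs_empty[simp]: "fs L f {} = zero L" unfolding fs_def by simp

lemma fs_infinite[simp]: "\<not> finite S \<Longrightarrow> fs L f S = zero L" unfolding fs_def by simp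

lemma fs_insert: "finite S \<Longrightarrow> i \<notin> S \<Longrightarrow> (\<And>j. j \<in> insert i S \<Longrightarrow> f j \<in> carrier L) \<Longrightarrow>
  fs L f (insert i S) = add L (f i) (fs L f S)"
  unfolding fs_def by (subst A.finprod_insert) (auto simp: Pi_def)

lemma fs_cong: "S = T \<Longrightarrow> (\<And>i. i \<in> T \<Longrightarrow> g i \<in> carrier L) \<Longrightarrow> (\<And>i. i \<in> T \<Longrightarrow> f i = g i) \<Longrightarrow>
   fs L f S = fs L g T"
  unfolding fs_def using A.finprod_cong'[of S T g f] by (auto simp: Pi_def)

lemma fs_add: "(\<And>i. i \<in> S \<Longrightarrow> f i \<in> carrier L) \<Longrightarrow> (\<And>i. i \<in> S \<Longrightarrow> g i \<in> carrier L) \<Longrightarrow>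
   fs L (\<lambda>i. add L (f i) (g i)) S = add L (fs L f S) (fs L g S)"
  unfolding fs_def using A.finprod_multf[of f S g] by (auto simp: Pi_def)

lemma fs_zero: "(\<And>i. i \<in> S \<Longrightarrow> f i = zero L) \<Longrightarrow> fs L f S = zero L"
  unfolding fs_def using A.finprod_one_eqI[of S f] by auto

lemma fs_single[simp]: "f i \<in> carrier L \<Longrightarrow> fs L f {i} = f i"
  using fs_insert[of "{}" i f] by simp

lemma fs_mono: "finite T \<Longrightarrow> S \<subseteq> T \<Longrightarrow> (\<And>i. i \<in> T - S \<Longrightarrow> f i = zero L) \<Longrightarrow>
   (\<And>i. i \<in> T \<Longrightarrow> f i \<in> carrier L) \<Longrightarrow> fs L f S = fs L f T"
  unfolding fs_def using A.finprod_mono_neutral_cong_left[of T S f f] by (auto simp: Pi_def)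

lemma fs_scal: assumes "\<And>i. i \<in> S \<Longrightarrow> f i \<in> carrier L"
  shows "scal L c (fs L f S) = fs L (\<lambda>i. scal L c (f i)) S"
  using assms
proof (induct S rule: infinite_finite_induct)
  case (insert i S)
  have fi: "\<And>j. j \<in> insert i S \<Longrightarrow> f j \<in> carrier L" using insert by auto
  have "scal L c (fs L f (insert i S)) = scal L c (add L (f i) (fs L f S))"
    using fs_insert[OF insert(1,2) fi] by simp
  also have "\<dots> = add L (scal L c (f i)) (scal L c (fs L f S))" using fi by (simp add: scal_add_r)
  also have "\<dots> = fs L (\<lambda>i. scal L c (f i)) (insert i S)"
    using fs_insert[OF insert(1,2), of "\<lambda>i. scal L c (f i)"] fi insert(3) fi by simp
  finally show ?case .
qed simp_all

lemma fs_neg: "(\<And>i. i \<in> S \<Longrightarrow> f i \<in> carrier L) \<Longrightarrow> neg L (fs L f S) = fs L (\<lambda>i. neg L (f i)) S"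
  unfolding neg_def by (rule fs_scal)

lemma fs_closed_sub: assumes "subspace L W" "\<And>i. i \<in> S \<Longrightarrow> f i \<in> W"
  shows "fs L f S \<in> W"
  using assms(2)
proof (induct S rule: infinite_finite_induct)
  case (infinite A)
  then show ?case using assms(1) by (simp add: subspace_def)
next
  case empty
  then show ?case using assms(1) by (simp add: subspace_def)
next
  case (insert i S)
  have fi: "\<And>j. j \<in> insert i S \<Longrightarrow> f j \<in> carrier L" using insert(4) assms(1) by (auto simp: subspace_def)
  show ?case using insert assms(1) fs_insert[OF insert(1,2) fi] by (simp add: subspace_def)
qed

lemma subspace_carrier: "subspace L (carrier L)"
  by (simp add: subspace_def)

lemma subspace_neg: "subspace L W \<Longrightarrow> x \<in> W \<Longrightarrow> neg L x \<in> W"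
  by (simp add: subspace_def neg_def)

lemma subspace_add: "subspace L W \<Longrightarrow> x \<in> W \<Longrightarrow> y \<in> W \<Longrightarrow> add L x y \<in> W"
  by (simp add: subspace_def)

lemma subspace_scal: "subspace L W \<Longrightarrow> x \<in> W \<Longrightarrow> scal L c x \<in> W"
  by (simp add: subspace_def)

lemma subspace_zero: "subspace L W \<Longrightarrow> zero L \<in> W"
  by (simp add: subspace_def)

lemma subspace_sub: "subspace L W \<Longrightarrow> x \<in> W \<Longrightarrow> x \<in> carrier L"
  by (auto simp add: subspace_def)

lemma span_subspace: "subspace L (span L X)" if "X \<subseteq> carrier L"
  using that unfolding span_def subspace_def by auto

lemma span_sup: "X \<subseteq> span L X"
  unfolding span_def by auto

lemma span_min: "subspace L W \<Longrightarrow> X \<subseteq> W \<Longrightarrow> span L X \<subseteq> W"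
  unfolding span_def by auto

lemma span_mono: "X \<subseteq> Y \<Longrightarrow> Y \<subseteq> carrier L \<Longrightarrow> span L X \<subseteq> span L Y"
  by (meson order_trans span_min span_subspace span_sup)

end


definition sums :: "('k, 'a, 'b) lsa_scheme \<Rightarrow> (int \<Rightarrow> 'a set) \<Rightarrow> 'a set" where
  "sums L W = {fs L f S | S f. finite S \<and> (\<forall>k\<in>S. f k \<in> W k)}"

context vsp begin

lemma hsum_cons[simp]: "hsum L (k # ks) c = add L (c k) (hsum L ks c)"
  by (simp add: hsum_def)
lemma hsum_nil[simp]: "hsum L [] c = zero L"
  by (simp add: hsum_def)

lemma hsum_fs: "distinct ks \<Longrightarrow> (\<forall>k\<in>set ks. c k \<in> carrier L) \<Longrightarrow> hsum L ks c = fs L c (set ks)"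
proof (induct ks)
  case (Cons k ks)
  then have "fs L c (insert k (set ks)) = add L (c k) (fs L c (set ks))" by (intro fs_insert) auto
  then show ?case using Cons by auto
qed simp

lemma sums_zero: "zero L \<in> sums L W"
  unfolding sums_def by (rule CollectI, rule exI[of _ "{}"]) auto

lemma sums_single: assumes "v \<in> W k" "\<And>k. W k \<subseteq> carrier L" shows "v \<in> sums L W"
proof -
  have "v \<in> carrier L" using assms by blast
  then have "v = fs L (\<lambda>_. v) {k}" by simp
  then show ?thesis unfolding sums_def using assms(1) by blast
qed

lemma sums_c: "(\<And>k. W k \<subseteq> carrier L) \<Longrightarrow> x \<in> sums L W \<Longrightarrow> x \<in> carrier L"
  unfolding sums_def by (auto intro!: fs_c)

lemma fs_ext: assumes "finite U" "S \<subseteq> U" "\<And>k. k \<in> S \<Longrightarrow> f k \<in> carrier L"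
  shows "fs L f S = fs L (\<lambda>k. if k \<in> S then f k else zero L) U"
proof -
  have "fs L f S = fs L (\<lambda>k. if k \<in> S then f k else zero L) S"
    by (rule fs_cong) (use assms in auto)
  also have "\<dots> = fs L (\<lambda>k. if k \<in> S then f k else zero L) U"
    by (rule fs_mono) (use assms in auto)
  finally show ?thesis .
qed

lemma sums_add: assumes W: "\<And>k. subspace L (W k)" and x: "x \<in> sums L W" and y: "y \<in> sums L W"
  shows "add L x y \<in> sums L W"
proof -
  have Wc: "\<And>k v. v \<in> W k \<Longrightarrow> v \<in> carrier L" using W subspace_sub by blast
  obtain S f where S: "finite S" "\<forall>k\<in>S. f k \<in> W k" "x = fs L f S" using x unfolding sums_def by blast
  obtain T g where T: "finite T" "\<forall>k\<in>T. g k \<in> W k" "y = fs L g T" using y unfolding sums_def by blast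
  define f' where "f' = (\<lambda>k. if k \<in> S then f k else zero L)"
  define g' where "g' = (\<lambda>k. if k \<in> T then g k else zero L)"
  have f'W: "\<And>k. f' k \<in> W k" unfolding f'_def using S W subspace_zero by auto
  have g'W: "\<And>k. g' k \<in> W k" unfolding g'_def using T W subspace_zero by auto
  have "x = fs L f' (S \<union> T)" unfolding f'_def S(3) by (rule fs_ext) (use S T Wc in auto)
  moreover have "y = fs L g' (S \<union> T)" unfolding g'_def T(3) by (rule fs_ext) (use S T Wc in auto)
  moreover have "fs L (\<lambda>k. add L (f' k) (g' k)) (S \<union> T) = add L (fs L f' (S \<union> T)) (fs L g' (S \<union> T))"
    by (rule fs_add) (use f'W g'W Wc in auto)
  ultimately have "add L x y = fs L (\<lambda>k. add L (f' k) (g' k)) (S \<union> T)" by simp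
  moreover have "\<forall>k\<in>S \<union> T. add L (f' k) (g' k) \<in> W k" using f'W g'W W subspace_add by blast
  ultimately show ?thesis unfolding sums_def using S T by blast
qed

lemma sums_scal: assumes W: "\<And>k. subspace L (W k)" and x: "x \<in> sums L W"
  shows "scal L c x \<in> sums L W"
proof -
  have Wc: "\<And>k v. v \<in> W k \<Longrightarrow> v \<in> carrier L" using W subspace_sub by blast
  obtain S f where S: "finite S" "\<forall>k\<in>S. f k \<in> W k" "x = fs L f S" using x unfolding sums_def by blast
  have "scal L c x = fs L (\<lambda>k. scal L c (f k)) S" using S by (simp only:, intro fs_scal) (use S Wc in auto)
  moreover have "\<forall>k\<in>S. scal L c (f k) \<in> W k" using S W subspace_scal by blast
  ultimately show ?thesis unfolding sums_def using S by blast
qed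

lemma sums_subspace: assumes W: "\<And>k. subspace L (W k)" shows "subspace L (sums L W)"
proof -
  have Wc: "\<And>k. W k \<subseteq> carrier L" using W subspace_sub by blast
  show ?thesis unfolding subspace_def
  proof (intro conjI ballI allI)
    show "sums L W \<subseteq> carrier L" using sums_c[of W] Wc by blast
    show "zero L \<in> sums L W" by (rule sums_zero)
    show "add L x y \<in> sums L W" if "x \<in> sums L W" "y \<in> sums L W" for x y using sums_add[OF W] that .
    show "scal L c x \<in> sums L W" if "x \<in> sums L W" for c x using sums_scal[OF W] that .
  qed
qed

lemma sums_span: assumes W: "\<And>k. subspace L (W k)" shows "sums L W = span L (\<Union>k. W k)"
proof
  have Wc: "\<And>k. W k \<subseteq> carrier L" using W subspace_sub by blast
  show "sums L W \<subseteq> span L (\<Union>k. W k)"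
  proof
    fix x assume "x \<in> sums L W"
    then obtain S f where S: "finite S" "\<forall>k\<in>S. f k \<in> W k" "x = fs L f S" unfolding sums_def by blast
    have "subspace L (span L (\<Union>k. W k))" using Wc by (intro span_subspace) auto
    moreover have "\<And>k. k \<in> S \<Longrightarrow> f k \<in> span L (\<Union>k. W k)" using S span_sup by blast
    ultimately show "x \<in> span L (\<Union>k. W k)" using S fs_closed_sub by metis
  qed
  show "span L (\<Union>k. W k) \<subseteq> sums L W"
  proof (rule span_min)
    show "subspace L (sums L W)" by (rule sums_subspace[OF W])
    show "(\<Union>k. W k) \<subseteq> sums L W" using sums_single[of _ W, OF _ Wc] by blast
  qed
qed

lemma sums_hsum: assumes W: "\<And>k. subspace L (W k)"
  shows "sums L W = {hsum L ks c | ks c. \<forall>k\<in>set ks. c k \<in> W k}"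
proof
  have Wc: "\<And>k v. v \<in> W k \<Longrightarrow> v \<in> carrier L" using W subspace_sub by blast
  show "sums L W \<subseteq> {hsum L ks c | ks c. \<forall>k\<in>set ks. c k \<in> W k}"
  proof
    fix x assume "x \<in> sums L W"
    then obtain S f where S: "finite S" "\<forall>k\<in>S. f k \<in> W k" "x = fs L f S" unfolding sums_def by blast
    have "x = hsum L (sorted_list_of_set S) f" using S Wc by (subst hsum_fs) auto
    moreover have "\<forall>k\<in>set (sorted_list_of_set S). f k \<in> W k" using S by simp
    ultimately show "x \<in> {hsum L ks c | ks c. \<forall>k\<in>set ks. c k \<in> W k}" by blast
  qed
  have "\<forall>k\<in>set ks. c k \<in> W k \<Longrightarrow> hsum L ks c \<in> sums L W" for ks c
  proof (induct ks)
    case Nil then show ?case using sums_zero by simp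
  next
    case (Cons k ks)
    then show ?case using sums_add[OF W] sums_single[of "c k" W k] Wc by (simp add: subset_iff)
  qed
  then show "{hsum L ks c | ks c. \<forall>k\<in>set ks. c k \<in> W k} \<subseteq> sums L W" by blast
qed

end

locale gvsp = vsp + assumes grL: "graded L"
begin

lemma grd_sub[simp]: "subspace L (grd L k)" using grL by (simp add: graded_def)
lemma grd_c: "v \<in> grd L k \<Longrightarrow> v \<in> carrier L" using grd_sub subspace_sub by blast
lemma zero_grd[simp]: "zero L \<in> grd L k" using grd_sub subspace_zero by blast
lemma add_grd: "x \<in> grd L k \<Longrightarrow> y \<in> grd L k \<Longrightarrow> add L x y \<in> grd L k"
  using grd_sub subspace_add by blast
lemma scal_grd: "x \<in> grd L k \<Longrightarrow> scal L c x \<in> grd L k"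
  using grd_sub subspace_scal by blast
lemma neg_grd: "x \<in> grd L k \<Longrightarrow> neg L x \<in> grd L k"
  using grd_sub subspace_neg by blast

lemma carrier_sums: "carrier L = sums L (grd L)"
  using grL sums_hsum[of "grd L"] by (simp add: graded_def)

lemma fs_grd_zero: assumes "finite S" "\<forall>k\<in>S. f k \<in> grd L k" "fs L f S = zero L"
  shows "\<forall>k\<in>S. f k = zero L"
proof -
  have "hsum L (sorted_list_of_set S) f = zero L"
    using assms grd_c by (subst hsum_fs) auto
  moreover have H: "distinct ks \<and> (\<forall>k\<in>set ks. c k \<in> grd L k) \<and> hsum L ks c = zero L
        \<longrightarrow> (\<forall>k\<in>set ks. c k = zero L)" for ks c using grL unfolding graded_def by blast
  ultimately show ?thesis using assms(1,2) H[of "sorted_list_of_set S" f] by simp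
qed

lemma fs_unique: assumes S: "finite S" "\<forall>k\<in>S. f k \<in> grd L k" and T: "finite T" "\<forall>k\<in>T. g k \<in> grd L k"
  and eq: "fs L f S = fs L g T"
  shows "(if k \<in> S then f k else zero L) = (if k \<in> T then g k else zero L)"
proof -
  define f' where "f' = (\<lambda>k. if k \<in> S then f k else zero L)"
  define g' where "g' = (\<lambda>k. if k \<in> T then g k else zero L)"
  have f'W: "\<And>k. f' k \<in> grd L k" unfolding f'_def using S by auto
  have g'W: "\<And>k. g' k \<in> grd L k" unfolding g'_def using T by auto
  have x: "fs L f S = fs L f' (S \<union> T)" unfolding f'_def by (rule fs_ext) (use S T grd_c in auto)
  have y: "fs L g T = fs L g' (S \<union> T)" unfolding g'_def by (rule fs_ext) (use S T grd_c in auto)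
  have "fs L (\<lambda>k. add L (f' k) (neg L (g' k))) (S \<union> T) = add L (fs L f' (S \<union> T)) (fs L (\<lambda>k. neg L (g' k)) (S \<union> T))"
    by (rule fs_add) (use f'W g'W grd_c neg_c in blast)+
  also have "\<dots> = add L (fs L f' (S \<union> T)) (neg L (fs L g' (S \<union> T)))"
    by (subst fs_neg) (use g'W grd_c in auto)
  also have "\<dots> = zero L" using x y eq add_neg g'W grd_c by (metis fs_c)
  finally have "\<forall>k\<in>S \<union> T. add L (f' k) (neg L (g' k)) = zero L"
    using fs_grd_zero[of "S \<union> T" "\<lambda>k. add L (f' k) (neg L (g' k))"] S T f'W g'W add_grd neg_grd by blast
  then have "\<forall>k\<in>S \<union> T. f' k = g' k" using add_neg_eq_zero f'W g'W grd_c by blast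
  moreover have "\<forall>k. k \<notin> S \<union> T \<longrightarrow> f' k = g' k" unfolding f'_def g'_def by auto
  ultimately show ?thesis unfolding f'_def g'_def by metis
qed

definition proj where
  "proj k x = (THE v. \<exists>S f. finite S \<and> (\<forall>j\<in>S. f j \<in> grd L j) \<and> x = fs L f S \<and>
                 v = (if k \<in> S then f k else zero L))"

lemma proj_eq: assumes "finite S" "\<forall>j\<in>S. f j \<in> grd L j" "x = fs L f S"
  shows "proj k x = (if k \<in> S then f k else zero L)"
  unfolding proj_def
proof (rule the_equality)
  show "\<exists>Sa fa. finite Sa \<and> (\<forall>j\<in>Sa. fa j \<in> grd L j) \<and> x = fs L fa Sa \<and>
      (if k \<in> S then f k else zero L) = (if k \<in> Sa then fa k else zero L)" using assms by blast
next
  fix v assume "\<exists>Sa fa. finite Sa \<and> (\<forall>j\<in>Sa. fa j \<in> grd L j) \<and> x = fs L fa Sa \<and>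
      v = (if k \<in> Sa then fa k else zero L)"
  then obtain Sa fa where "finite Sa" "\<forall>j\<in>Sa. fa j \<in> grd L j" "x = fs L fa Sa"
      "v = (if k \<in> Sa then fa k else zero L)" by blast
  then show "v = (if k \<in> S then f k else zero L)" using fs_unique[OF assms(1,2)] assms(3) by metis
qed

lemma decomp_ex: assumes "x \<in> carrier L"
  obtains S f where "finite S" "\<forall>j\<in>S. f j \<in> grd L j" "x = fs L f S"
  using assms carrier_sums unfolding sums_def by blast

lemma proj_grd[simp]: assumes "x \<in> carrier L" shows "proj k x \<in> grd L k"
proof -
  obtain S f where "finite S" "\<forall>j\<in>S. f j \<in> grd L j" "x = fs L f S" using decomp_ex assms by blast
  then show ?thesis using proj_eq by auto
qed

lemma proj_c[simp]: "x \<in> carrier L \<Longrightarrow> proj k x \<in> carrier L" using proj_grd grd_c by blast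

lemma decomp: assumes "x \<in> carrier L"
  obtains S where "finite S" "x = fs L (\<lambda>k. proj k x) S" "\<And>k. k \<notin> S \<Longrightarrow> proj k x = zero L"
proof -
  obtain S f where S: "finite S" "\<forall>j\<in>S. f j \<in> grd L j" "x = fs L f S" using decomp_ex assms by blast
  have "x = fs L (\<lambda>k. proj k x) S"
    using S by (subst S(3), intro fs_cong) (auto simp: proj_eq grd_c)
  then show ?thesis using that S proj_eq by auto
qed

lemma decomp_super: assumes "x \<in> carrier L" "finite T" "\<And>k. k \<notin> T \<Longrightarrow> proj k x = zero L"
  shows "x = fs L (\<lambda>k. proj k x) T"
proof -
  obtain S where S: "finite S" "x = fs L (\<lambda>k. proj k x) S" "\<And>k. k \<notin> S \<Longrightarrow> proj k x = zero L"
    using decomp assms by blast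
  have "fs L (\<lambda>k. proj k x) S = fs L (\<lambda>k. proj k x) (S \<union> T)"
    by (rule fs_mono) (use S assms in auto)
  also have "\<dots> = fs L (\<lambda>k. proj k x) T"
    by (rule fs_mono[symmetric]) (use S assms in auto)
  finally show ?thesis using S by simp
qed

lemma proj_hom: assumes "v \<in> grd L k" shows "proj j v = (if j = k then v else zero L)"
  using proj_eq[of "{k}" "\<lambda>_. v" v j] assms grd_c by auto

lemma proj_zero[simp]: "proj j (zero L) = zero L"
  using proj_hom[of "zero L" 0] by auto

lemma proj_add: assumes "x \<in> carrier L" "y \<in> carrier L"
  shows "proj k (add L x y) = add L (proj k x) (proj k y)"
proof -
  obtain S where S: "finite S" "x = fs L (\<lambda>k. proj k x) S" "\<And>k. k \<notin> S \<Longrightarrow> proj k x = zero L"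
    using decomp assms by blast
  obtain T where T: "finite T" "y = fs L (\<lambda>k. proj k y) T" "\<And>k. k \<notin> T \<Longrightarrow> proj k y = zero L"
    using decomp assms by blast
  have x: "x = fs L (\<lambda>k. proj k x) (S \<union> T)" using S T assms by (intro decomp_super) auto
  have y: "y = fs L (\<lambda>k. proj k y) (S \<union> T)" using S T assms by (intro decomp_super) auto
  have "add L x y = fs L (\<lambda>k. add L (proj k x) (proj k y)) (S \<union> T)"
    by (subst x, subst y, rule fs_add[symmetric]) (use assms in auto)
  then have "proj k (add L x y) = (if k \<in> S \<union> T then add L (proj k x) (proj k y) else zero L)"
    using S T assms add_grd by (intro proj_eq) auto
  then show ?thesis using S T by auto
qed

lemma proj_scal: assumes "x \<in> carrier L"
  shows "proj k (scal L c x) = scal L c (proj k x)"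
proof -
  obtain S where S: "finite S" "x = fs L (\<lambda>k. proj k x) S" "\<And>k. k \<notin> S \<Longrightarrow> proj k x = zero L"
    using decomp assms by blast
  have "scal L c x = fs L (\<lambda>k. scal L c (proj k x)) S"
    by (subst S(2), rule fs_scal) (use assms in auto)
  then have "proj k (scal L c x) = (if k \<in> S then scal L c (proj k x) else zero L)"
    using S assms scal_grd by (intro proj_eq) auto
  then show ?thesis using S by auto
qed

lemma proj_neg: "x \<in> carrier L \<Longrightarrow> proj k (neg L x) = neg L (proj k x)"
  by (simp add: neg_def proj_scal)

lemma eq_by_proj: assumes "x \<in> carrier L" "y \<in> carrier L" "\<And>k. proj k x = proj k y"
  shows "x = y"
proof -
  obtain S where S: "finite S" "x = fs L (\<lambda>k. proj k x) S" "\<And>k. k \<notin> S \<Longrightarrow> proj k x = zero L"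
    using decomp assms by blast
  have "y = fs L (\<lambda>k. proj k y) S" using S assms by (intro decomp_super) auto
  then show ?thesis using S assms by simp
qed

lemma proj_fs: assumes "finite S" "\<forall>j\<in>S. f j \<in> grd L j"
  shows "proj k (fs L f S) = (if k \<in> S then f k else zero L)"
  using proj_eq assms by blast

lemma grd_iff: assumes "x \<in> carrier L" shows "x \<in> grd L k \<longleftrightarrow> (\<forall>j. j \<noteq> k \<longrightarrow> proj j x = zero L)"
proof
  assume "x \<in> grd L k" then show "\<forall>j. j \<noteq> k \<longrightarrow> proj j x = zero L" by (simp add: proj_hom)
next
  assume a: "\<forall>j. j \<noteq> k \<longrightarrow> proj j x = zero L"
  have "x = fs L (\<lambda>k. proj k x) {k}" using a assms by (intro decomp_super) auto
  then show "x \<in> grd L k" using assms proj_grd[of x k] by simp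
qed

end

locale lsap = gvsp + assumes lieL: "lie_superalgebra L"
begin

lemma brk_c[simp]: "x \<in> carrier L \<Longrightarrow> y \<in> carrier L \<Longrightarrow> brk L x y \<in> carrier L"
  using lieL[unfolded lie_superalgebra_def, THEN conjunct2, THEN conjunct2, THEN conjunct1] by blast
lemma brk_add_l: "x \<in> carrier L \<Longrightarrow> y \<in> carrier L \<Longrightarrow> z \<in> carrier L \<Longrightarrow>
  brk L (add L x y) z = add L (brk L x z) (brk L y z)"
  using lieL[unfolded lie_superalgebra_def, THEN conjunct2, THEN conjunct2, THEN conjunct2, THEN conjunct1] by blast
lemma brk_add_r: "x \<in> carrier L \<Longrightarrow> y \<in> carrier L \<Longrightarrow> z \<in> carrier L \<Longrightarrow>
  brk L z (add L x y) = add L (brk L z x) (brk L z y)"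
  using lieL[unfolded lie_superalgebra_def, THEN conjunct2, THEN conjunct2, THEN conjunct2, THEN conjunct1] by blast
lemma brk_scal_l: "x \<in> carrier L \<Longrightarrow> y \<in> carrier L \<Longrightarrow> brk L (scal L c x) y = scal L c (brk L x y)"
  using lieL[unfolded lie_superalgebra_def, THEN conjunct2, THEN conjunct2, THEN conjunct2, THEN conjunct2, THEN conjunct1] by blast
lemma brk_scal_r: "x \<in> carrier L \<Longrightarrow> y \<in> carrier L \<Longrightarrow> brk L x (scal L c y) = scal L c (brk L x y)"
  using lieL[unfolded lie_superalgebra_def, THEN conjunct2, THEN conjunct2, THEN conjunct2, THEN conjunct2, THEN conjunct1] by blast
lemma brk_grd: "x \<in> grd L i \<Longrightarrow> y \<in> grd L j \<Longrightarrow> brk L x y \<in> grd L (i + j)"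
  using lieL[unfolded lie_superalgebra_def, THEN conjunct2, THEN conjunct2, THEN conjunct2, THEN conjunct2, THEN conjunct2, THEN conjunct1] by blast
lemma anti: "x \<in> grd L i \<Longrightarrow> y \<in> grd L j \<Longrightarrow> brk L x y = scal L (- ssign i j) (brk L y x)"
  using lieL[unfolded lie_superalgebra_def, THEN conjunct2, THEN conjunct2, THEN conjunct2, THEN conjunct2, THEN conjunct2, THEN conjunct2, THEN conjunct1] by blast
lemma jacobi: "x \<in> grd L i \<Longrightarrow> y \<in> grd L j \<Longrightarrow> z \<in> carrier L \<Longrightarrow>
  brk L x (brk L y z) = add L (brk L (brk L x y) z) (scal L (ssign i j) (brk L y (brk L x z)))"
  using lieL[unfolded lie_superalgebra_def, THEN conjunct2, THEN conjunct2, THEN conjunct2, THEN conjunct2, THEN conjunct2, THEN conjunct2, THEN conjunct2] by blast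

lemma brk_zero_l[simp]: assumes "y \<in> carrier L" shows "brk L (zero L) y = zero L"
proof -
  have "brk L (zero L) y = scal L 0 (brk L (zero L) y)"
    using brk_scal_l[of "zero L" y 0] assms by simp
  then show ?thesis using assms by simp
qed

lemma brk_zero_r[simp]: assumes "y \<in> carrier L" shows "brk L y (zero L) = zero L"
proof -
  have "brk L y (zero L) = scal L 0 (brk L y (zero L))"
    using brk_scal_r[of y "zero L" 0] assms by simp
  then show ?thesis using assms by simp
qed

lemma brk_neg_l: "x \<in> carrier L \<Longrightarrow> y \<in> carrier L \<Longrightarrow> brk L (neg L x) y = neg L (brk L x y)"
  by (simp add: neg_def brk_scal_l)
lemma brk_neg_r: "x \<in> carrier L \<Longrightarrow> y \<in> carrier L \<Longrightarrow> brk L x (neg L y) = neg L (brk L x y)"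
  by (simp add: neg_def brk_scal_r)

lemma brk_fs_l: assumes "\<And>i. i \<in> S \<Longrightarrow> f i \<in> carrier L" "y \<in> carrier L"
  shows "brk L (fs L f S) y = fs L (\<lambda>i. brk L (f i) y) S"
  using assms(1)
proof (induct S rule: infinite_finite_induct)
  case (insert i S)
  have fi: "\<And>j. j \<in> insert i S \<Longrightarrow> f j \<in> carrier L" using insert by auto
  have "brk L (fs L f (insert i S)) y = brk L (add L (f i) (fs L f S)) y"
    using fs_insert[OF insert(1,2) fi] by simp
  also have "\<dots> = add L (brk L (f i) y) (brk L (fs L f S) y)" using fi assms(2) by (simp add: brk_add_l)
  also have "\<dots> = fs L (\<lambda>i. brk L (f i) y) (insert i S)"
    using fs_insert[OF insert(1,2), of "\<lambda>i. brk L (f i) y"] fi insert(3) assms(2) by simp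
  finally show ?case .
qed (use assms in simp_all)

lemma brk_fs_r: assumes "\<And>i. i \<in> S \<Longrightarrow> f i \<in> carrier L" "y \<in> carrier L"
  shows "brk L y (fs L f S) = fs L (\<lambda>i. brk L y (f i)) S"
  using assms(1)
proof (induct S rule: infinite_finite_induct)
  case (insert i S)
  have fi: "\<And>j. j \<in> insert i S \<Longrightarrow> f j \<in> carrier L" using insert by auto
  have "brk L y (fs L f (insert i S)) = brk L y (add L (f i) (fs L f S))"
    using fs_insert[OF insert(1,2) fi] by simp
  also have "\<dots> = add L (brk L y (f i)) (brk L y (fs L f S))" using fi assms(2) by (simp add: brk_add_r)
  also have "\<dots> = fs L (\<lambda>i. brk L y (f i)) (insert i S)"
    using fs_insert[OF insert(1,2), of "\<lambda>i. brk L y (f i)"] fi insert(3) assms(2) by simp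
  finally show ?case .
qed (use assms in simp_all)

lemma sub_lsa:
  assumes Wsub: "\<And>k. subspace L (W k)" and Wg: "\<And>k. W k \<subseteq> grd L k"
    and Wb: "\<And>i j a b. a \<in> W i \<Longrightarrow> b \<in> W j \<Longrightarrow> brk L a b \<in> W (i + j)"
  shows "lie_superalgebra (L\<lparr>carrier := span L (\<Union>k. W k), grd := W\<rparr>)"
proof -
  let ?M = "L\<lparr>carrier := span L (\<Union>k. W k), grd := W\<rparr>"
  have cM: "carrier ?M = sums L W" using sums_span[OF Wsub] by simp
  have Wc: "\<And>k v. v \<in> W k \<Longrightarrow> v \<in> carrier L" using Wsub subspace_sub by blast
  have MC: "\<And>x. x \<in> sums L W \<Longrightarrow> x \<in> carrier L" using sums_c Wc by blast
  have SS: "subspace L (sums L W)" using sums_subspace[OF Wsub] .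
  have Mops: "add ?M = add L" "scal ?M = scal L" "zero ?M = zero L" "brk ?M = brk L" "grd ?M = W"
    "carrier ?M = span L (\<Union>k. W k)" by simp_all
  have vsM: "vs ?M"
    unfolding vs_def cM
  proof (intro conjI ballI allI)
    show "zero ?M \<in> sums L W" using sums_zero by simp
    show "add ?M x y \<in> sums L W" if "x \<in> sums L W" "y \<in> sums L W" for x y
      using sums_add[OF Wsub] that by simp
    show "scal ?M c x \<in> sums L W" if "x \<in> sums L W" for c x
      using sums_scal[OF Wsub] that by simp
    show "add ?M (add ?M x y) z = add ?M x (add ?M y z)" if "x \<in> sums L W" "y \<in> sums L W" "z \<in> sums L W" for x y z
      using that MC add_assoc[of x y z] by (simp only: Mops)
    show "add ?M x y = add ?M y x" if "x \<in> sums L W" "y \<in> sums L W" for x y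
      using that MC add_comm[of x y] by (simp only: Mops)
    show "add ?M (zero ?M) x = x" if "x \<in> sums L W" for x
      using that MC add_zl[of x] by (simp only: Mops)
    show "\<exists>y\<in>sums L W. add ?M x y = zero ?M" if "x \<in> sums L W" for x
    proof -
      have "neg L x \<in> sums L W" "add L x (neg L x) = zero L"
        using MC[OF that] add_neg[of x] subspace_neg[OF SS that] by auto
      then show ?thesis unfolding Mops by (rule bexI[rotated])
    qed
    show "scal ?M c (add ?M x y) = add ?M (scal ?M c x) (scal ?M c y)" if "x \<in> sums L W" "y \<in> sums L W" for c x y
      using that MC scal_add_r[of x y c] by (simp only: Mops)
    show "scal ?M (c + d) x = add ?M (scal ?M c x) (scal ?M d x)" if "x \<in> sums L W" for c d x
      using that MC scal_add_l[of x c d] by (simp only: Mops)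
    show "scal ?M (c * d) x = scal ?M c (scal ?M d x)" if "x \<in> sums L W" for c d x
      using that MC scal_scal[of x c d] by (simp only: Mops)
    show "scal ?M 1 x = x" if "x \<in> sums L W" for x
      using that MC scal_one[of x] by (simp only: Mops)
  qed
  have hs: "hsum ?M = hsum L" by (intro ext) (simp add: hsum_def)
  have subM: "\<And>k. subspace ?M (W k)"
    using Wsub sums_single[of _ W] Wc unfolding subspace_def cM by auto
  have grM: "graded ?M"
    unfolding graded_def hs
    apply (intro conjI)
    subgoal using subM by simp
    subgoal using cM sums_hsum[OF Wsub] by simp
    subgoal
    proof (intro allI impI ballI)
      fix ks c k assume a: "distinct ks \<and> (\<forall>k\<in>set ks. c k \<in> grd ?M k) \<and> hsum L ks c = zero ?M" and k: "k \<in> set ks"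
      have H: "distinct ks \<and> (\<forall>k\<in>set ks. c k \<in> grd L k) \<and> hsum L ks c = zero L
        \<longrightarrow> (\<forall>k\<in>set ks. c k = zero L)" using grL unfolding graded_def by blast
      show "c k = zero ?M" using H a k Wg by auto
    qed
    done
  have brkM: "\<And>x y. x \<in> sums L W \<Longrightarrow> y \<in> sums L W \<Longrightarrow> brk L x y \<in> sums L W"
  proof -
    fix x y assume x: "x \<in> sums L W" and y: "y \<in> sums L W"
    obtain S f where S: "finite S" "\<forall>k\<in>S. f k \<in> W k" "x = fs L f S" using x unfolding sums_def by blast
    obtain T g where T: "finite T" "\<forall>k\<in>T. g k \<in> W k" "y = fs L g T" using y unfolding sums_def by blast
    have "brk L x y = fs L (\<lambda>i. brk L (f i) y) S" unfolding S(3) by (rule brk_fs_l) (use S MC y Wc in auto)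
    also have "\<dots> = fs L (\<lambda>i. fs L (\<lambda>j. brk L (f i) (g j)) T) S"
    proof (rule fs_cong)
      fix i assume i: "i \<in> S"
      have fi: "f i \<in> carrier L" using i S Wc by blast
      show "fs L (\<lambda>j. brk L (f i) (g j)) T \<in> carrier L" by (rule fs_c) (use fi T Wc in auto)
      show "brk L (f i) y = fs L (\<lambda>j. brk L (f i) (g j)) T" unfolding T(3)
        by (rule brk_fs_r) (use fi T Wc in auto)
    qed simp
    finally have e: "brk L x y = fs L (\<lambda>i. fs L (\<lambda>j. brk L (f i) (g j)) T) S" .
    have A: "brk L (f i) (g j) \<in> sums L W" if "i \<in> S" "j \<in> T" for i j
    proof -
      have "brk L (f i) (g j) \<in> W (i + j)" using S T Wb that by blast
      then show "brk L (f i) (g j) \<in> sums L W" by (rule sums_single) (use Wc in blast)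
    qed
    have B: "fs L (\<lambda>j. brk L (f i) (g j)) T \<in> sums L W" if "i \<in> S" for i
      by (rule fs_closed_sub[OF SS]) (rule A[OF that])
    show "brk L x y \<in> sums L W" unfolding e by (rule fs_closed_sub[OF SS]) (rule B)
  qed
  have spanC: "span L (\<Union>k. W k) \<subseteq> carrier L" using MC sums_span[OF Wsub] by auto
  show ?thesis
    unfolding lie_superalgebra_def
    apply (intro conjI)
    subgoal using vsM .
    subgoal using grM .
    subgoal using brkM cM by simp
    subgoal using MC cM brk_add_l brk_add_r by simp
    subgoal using MC cM brk_scal_l brk_scal_r by simp
    subgoal using Wb by simp
    subgoal unfolding Mops by (intro allI ballI, rule anti) (use Wg in blast)+
    subgoal unfolding Mops by (intro allI ballI, rule jacobi) (use Wg spanC in blast)+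
    done
qed

end


context vsp begin
lemma subspace_zero_set: "subspace L {zero L}"
  unfolding subspace_def by simp
end

context gvsp begin

definition W2 :: "int \<Rightarrow> _" where "W2 k = (if 1 \<le> k then grd L k else {zero L})"

lemma W2_sub: "subspace L (W2 k)" unfolding W2_def using subspace_zero_set by simp
lemma W2_grd: "W2 k \<subseteq> grd L k" unfolding W2_def by auto

lemma span_pos_eq: "span L (\<Union>k\<in>{1..}. grd L k) = span L (\<Union>k. W2 k)"
proof
  have U2c: "(\<Union>k. W2 k) \<subseteq> carrier L" using W2_grd grd_c by blast
  show "span L (\<Union>k\<in>{1..}. grd L k) \<subseteq> span L (\<Union>k. W2 k)"
    by (rule span_mono) (use U2c in \<open>auto simp: W2_def\<close>)
  have Pc: "(\<Union>k\<in>{1..}. grd L k) \<subseteq> carrier L" using grd_c by blast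
  have ss: "subspace L (span L (\<Union>k\<in>{1..}. grd L k))" by (rule span_subspace[OF Pc])
  show "span L (\<Union>k. W2 k) \<subseteq> span L (\<Union>k\<in>{1..}. grd L k)"
  proof (rule span_min[OF ss])
    show "(\<Union>k. W2 k) \<subseteq> span L (\<Union>k\<in>{1..}. grd L k)"
    proof
      fix x assume "x \<in> (\<Union>k. W2 k)"
      then obtain k where k: "x \<in> W2 k" by blast
      show "x \<in> span L (\<Union>k\<in>{1..}. grd L k)"
      proof (cases "1 \<le> k")
        case True
        then show ?thesis using k span_sup[of "\<Union>k\<in>{1..}. grd L k"] unfolding W2_def by auto
      next
        case False
        then show ?thesis using k subspace_zero[OF ss] unfolding W2_def by auto
      qed
    qed
  qed
qed

lemma span_pos_sums: "span L (\<Union>k\<in>{1..}. grd L k) = sums L W2"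
  using span_pos_eq sums_span[OF W2_sub] by simp

lemma pos_char: "x \<in> span L (\<Union>k\<in>{1..}. grd L k) \<longleftrightarrow> x \<in> carrier L \<and> (\<forall>k\<le>0. proj k x = zero L)"
proof
  assume "x \<in> span L (\<Union>k\<in>{1..}. grd L k)"
  then have "x \<in> sums L W2" using span_pos_sums by simp
  then obtain S f where S: "finite S" "\<forall>k\<in>S. f k \<in> W2 k" "x = fs L f S" unfolding sums_def by blast
  have fg: "\<forall>k\<in>S. f k \<in> grd L k" using S W2_grd by blast
  have "x \<in> carrier L" using S(3) fg grd_c fs_c by metis
  moreover have "\<forall>k\<le>0. proj k x = zero L"
  proof (intro allI impI)
    fix k :: int assume "k \<le> 0"
    then show "proj k x = zero L" using proj_fs[OF S(1) fg] S(2,3) unfolding W2_def by auto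
  qed
  ultimately show "x \<in> carrier L \<and> (\<forall>k\<le>0. proj k x = zero L)" by blast
next
  assume a: "x \<in> carrier L \<and> (\<forall>k\<le>0. proj k x = zero L)"
  then obtain S where S: "finite S" "x = fs L (\<lambda>k. proj k x) S" using decomp by metis
  have "\<forall>k\<in>S. proj k x \<in> W2 k" using a unfolding W2_def by auto
  then have "x \<in> sums L W2" unfolding sums_def using S by blast
  then show "x \<in> span L (\<Union>k\<in>{1..}. grd L k)" using span_pos_sums by simp
qed

lemma pos_subspace: "subspace L (span L (\<Union>k\<in>{1..}. grd L k))"
  by (rule span_subspace) (use grd_c in blast)

lemma grd_pos: "1 \<le> k \<Longrightarrow> v \<in> grd L k \<Longrightarrow> v \<in> span L (\<Union>k\<in>{1..}. grd L k)"
  using span_sup by fastforce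

lemma pos_decomp: assumes "x \<in> span L (\<Union>k\<in>{1..}. grd L k)"
  obtains S where "finite S" "S \<subseteq> {1..}" "x = fs L (\<lambda>k. proj k x) S" "\<And>k. k \<notin> S \<Longrightarrow> proj k x = zero L"
proof -
  have x: "x \<in> carrier L" "\<forall>k\<le>0. proj k x = zero L" using assms pos_char by auto
  obtain S where S: "finite S" "x = fs L (\<lambda>k. proj k x) S" "\<And>k. k \<notin> S \<Longrightarrow> proj k x = zero L"
    using decomp x(1) by metis
  let ?S = "S \<inter> {1..}"
  have "x = fs L (\<lambda>k. proj k x) ?S"
    by (rule decomp_super) (use x S in auto)
  moreover have "\<And>k. k \<notin> ?S \<Longrightarrow> proj k x = zero L" using x S by force
  ultimately show ?thesis using that S by blast
qed

end

context lsap begin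

lemma W2_brk: "a \<in> W2 i \<Longrightarrow> b \<in> W2 j \<Longrightarrow> brk L a b \<in> W2 (i + j)"
  unfolding W2_def using brk_grd grd_c
  by (auto split: if_splits)

lemma pos_brk: assumes "x \<in> span L (\<Union>k\<in>{1..}. grd L k)" "y \<in> span L (\<Union>k\<in>{1..}. grd L k)"
  shows "brk L x y \<in> span L (\<Union>k\<in>{1..}. grd L k)"
proof -
  have "lie_superalgebra (L\<lparr>carrier := span L (\<Union>k. W2 k), grd := W2\<rparr>)"
    by (rule sub_lsa[OF W2_sub W2_grd W2_brk])
  then have "\<forall>x\<in>span L (\<Union>k. W2 k). \<forall>y\<in>span L (\<Union>k. W2 k). brk L x y \<in> span L (\<Union>k. W2 k)"
    unfolding lie_superalgebra_def by simp
  then show ?thesis using assms span_pos_eq by simp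
qed

lemma jac_rearr: assumes "x \<in> grd L i" "y \<in> grd L j" "z \<in> carrier L"
  shows "brk L (brk L x y) z = add L (brk L x (brk L y z)) (scal L (- ssign i j) (brk L y (brk L x z)))"
proof -
  have c: "x \<in> carrier L" "y \<in> carrier L" using assms grd_c by auto
  have "brk L (brk L x y) z = add L (brk L x (brk L y z)) (neg L (scal L (ssign i j) (brk L y (brk L x z))))"
    by (rule eq_add_neg) (use c assms in \<open>simp_all add: jacobi[OF assms, symmetric]\<close>)
  also have "neg L (scal L (ssign i j) (brk L y (brk L x z))) = scal L (- ssign i j) (brk L y (brk L x z))"
    using c assms by (simp add: neg_def scal_scal)
  finally show ?thesis .
qed

end


lemma lsapI: assumes "lie_superalgebra L" shows "lsap L"
proof -
  have v: "vs L" and g: "graded L" using assms unfolding lie_superalgebra_def by blast+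
  show ?thesis
    by (intro lsap.intro gvsp.intro vsp.intro gvsp_axioms.intro lsap_axioms.intro v g assms)
qed

locale setting =
  fixes G :: "('k::field_char_0, 'g) lsa" and U :: "('k, 'u) lsa"
    and \<iota> :: "'g \<Rightarrow> 'u" and \<pi> :: "'u \<Rightarrow> 'g"
  assumes G_lsa: "lie_superalgebra G"
    and G_trans: "pos_0_transitive G"
    and G_gen: "lie_gen G (grd G 1) = carrier (pos_part G)"
    and U_univ: "universal_lsa U"
    and \<iota>_lin: "lin_map G U (grd G 1) (grd U 1) \<iota>"
    and \<iota>_bij: "bij_betw \<iota> (grd G 1) (grd U 1)"
    and \<pi>_hom: "lsa_hom (pos_part U) (pos_part G) \<pi>"
    and \<pi>_id: "\<forall>x\<in>grd G 1. \<pi> (\<iota> x) = x"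
begin

lemma U_lsa: "lie_superalgebra U" using U_univ unfolding universal_lsa_def by blast

sublocale GG: lsap G by (rule lsapI[OF G_lsa])
sublocale UU: lsap U by (rule lsapI[OF U_lsa])

abbreviation "PU \<equiv> span U (\<Union>k\<in>{1..}. grd U k)"
abbreviation "PG \<equiv> span G (\<Union>k\<in>{1..}. grd G k)"

lemma pos_part_simps[simp]: "carrier (pos_part L) = span L (\<Union>k\<in>{1..}. grd L k)"
  "grd (pos_part L) k = (if 1 \<le> k then grd L k else {zero L})"
  "add (pos_part L) = add L" "scal (pos_part L) = scal L" "brk (pos_part L) = brk L"
  "zero (pos_part L) = zero L"
  by (simp_all add: pos_part_def)

lemma \<pi>_PU: "x \<in> PU \<Longrightarrow> \<pi> x \<in> PG"
  using \<pi>_hom unfolding lsa_hom_def lin_map_def by simp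
lemma \<pi>_add: "x \<in> PU \<Longrightarrow> y \<in> PU \<Longrightarrow> \<pi> (add U x y) = add G (\<pi> x) (\<pi> y)"
  using \<pi>_hom unfolding lsa_hom_def lin_map_def by simp
lemma \<pi>_scal: "x \<in> PU \<Longrightarrow> \<pi> (scal U c x) = scal G c (\<pi> x)"
  using \<pi>_hom unfolding lsa_hom_def lin_map_def by simp
lemma \<pi>_brk: "x \<in> PU \<Longrightarrow> y \<in> PU \<Longrightarrow> \<pi> (brk U x y) = brk G (\<pi> x) (\<pi> y)"
  using \<pi>_hom unfolding lsa_hom_def by simp
lemma \<pi>_grd: "1 \<le> k \<Longrightarrow> x \<in> grd U k \<Longrightarrow> \<pi> x \<in> grd G k"
proof -
  assume a: "1 \<le> k" "x \<in> grd U k"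
  have "\<forall>k. \<forall>x\<in>grd (pos_part U) k. \<pi> x \<in> grd (pos_part G) k"
    using \<pi>_hom unfolding lsa_hom_def by blast
  then have "\<forall>x\<in>grd (pos_part U) k. \<pi> x \<in> grd (pos_part G) k" by blast
  with a show ?thesis by simp
qed

lemma PU_c: "x \<in> PU \<Longrightarrow> x \<in> carrier U" using UU.pos_char[THEN iffD1] by simp
lemma PG_c: "x \<in> PG \<Longrightarrow> x \<in> carrier G" using GG.pos_char[THEN iffD1] by simp

lemma \<pi>_zero[simp]: "\<pi> (zero U) = zero G"
proof -
  have z: "zero U \<in> PU" using UU.pos_subspace UU.subspace_zero by blast
  then have "\<pi> (zero U) = add G (\<pi> (zero U)) (\<pi> (zero U))" using \<pi>_add[OF z z] by simp
  then have "add G (\<pi> (zero U)) (\<pi> (zero U)) = add G (\<pi> (zero U)) (zero G)"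
    using \<pi>_PU[OF z] PG_c by simp
  then show ?thesis using GG.add_cancel_l \<pi>_PU[OF z] PG_c GG.zero_c by metis
qed

lemma \<pi>_neg: "x \<in> PU \<Longrightarrow> \<pi> (neg U x) = neg G (\<pi> x)"
  by (simp add: neg_def \<pi>_scal)

lemma \<pi>_fs: assumes "\<And>i. i \<in> S \<Longrightarrow> f i \<in> PU"
  shows "\<pi> (fs U f S) = fs G (\<lambda>i. \<pi> (f i)) S"
  using assms
proof (induct S rule: infinite_finite_induct)
  case (insert i S)
  have fi: "\<And>j. j \<in> insert i S \<Longrightarrow> f j \<in> carrier U" using insert PU_c by blast
  have fi2: "\<And>j. j \<in> insert i S \<Longrightarrow> \<pi> (f j) \<in> carrier G" using insert \<pi>_PU PG_c by blast
  have fsP: "fs U f S \<in> PU" by (rule UU.fs_closed_sub[OF UU.pos_subspace]) (use insert in auto)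
  have "\<pi> (fs U f (insert i S)) = \<pi> (add U (f i) (fs U f S))" using UU.fs_insert[OF insert(1,2) fi] by simp
  also have "\<dots> = add G (\<pi> (f i)) (\<pi> (fs U f S))" using \<pi>_add insert fsP by simp
  also have "\<dots> = fs G (\<lambda>i. \<pi> (f i)) (insert i S)"
    using GG.fs_insert[OF insert(1,2), of "\<lambda>i. \<pi> (f i)"] fi2 insert by simp
  finally show ?case .
qed simp_all

lemma \<pi>_proj: assumes x: "x \<in> PU" and k: "1 \<le> k"
  shows "GG.proj k (\<pi> x) = \<pi> (UU.proj k x)"
proof -
  obtain S where S: "finite S" "S \<subseteq> {1..}" "x = fs U (\<lambda>k. UU.proj k x) S"
      "\<And>k. k \<notin> S \<Longrightarrow> UU.proj k x = zero U"
    using UU.pos_decomp[OF x] by blast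
  have xc: "x \<in> carrier U" using x PU_c by blast
  have inP: "\<And>i. i \<in> S \<Longrightarrow> UU.proj i x \<in> PU"
  proof -
    fix i assume "i \<in> S" then have "1 \<le> i" using S(2) by auto
    then show "UU.proj i x \<in> PU" using UU.grd_pos UU.proj_grd[OF xc] by blast
  qed
  have "\<pi> (fs U (\<lambda>k. UU.proj k x) S) = fs G (\<lambda>i. \<pi> (UU.proj i x)) S" by (rule \<pi>_fs[OF inP])
  then have eq: "\<pi> x = fs G (\<lambda>i. \<pi> (UU.proj i x)) S" using S(3)[symmetric] by simp
  have gr: "\<forall>i\<in>S. \<pi> (UU.proj i x) \<in> grd G i"
  proof
    fix i assume "i \<in> S" then have "1 \<le> i" using S(2) by auto
    then show "\<pi> (UU.proj i x) \<in> grd G i" using \<pi>_grd UU.proj_grd[OF xc] by blast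
  qed
  have "GG.proj k (\<pi> x) = (if k \<in> S then \<pi> (UU.proj k x) else zero G)"
    unfolding eq by (rule GG.proj_fs[OF S(1) gr])
  then show ?thesis using S(4)[of k] by (cases "k \<in> S") simp_all
qed

lemma \<pi>_proj_nonpos: assumes x: "x \<in> PU" and k: "k \<le> 0"
  shows "GG.proj k (\<pi> x) = zero G"
proof -
  have "\<pi> x \<in> PG" using \<pi>_PU x by blast
  then have "\<pi> x \<in> carrier G \<and> (\<forall>k\<le>0. GG.proj k (\<pi> x) = zero G)" by (rule GG.pos_char[THEN iffD1])
  then show ?thesis using k by simp
qed

lemma U1_PU: "e \<in> grd U 1 \<Longrightarrow> e \<in> PU" using UU.grd_pos[of 1 e] by simp

lemma \<pi>_U1: assumes "e \<in> grd U 1" shows "\<pi> e \<in> grd G 1" "\<iota> (\<pi> e) = e"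
proof -
  obtain g where g: "g \<in> grd G 1" "e = \<iota> g" using \<iota>_bij assms unfolding bij_betw_def by blast
  then show "\<pi> e \<in> grd G 1" "\<iota> (\<pi> e) = e" using \<pi>_id by auto
qed

lemma \<pi>_inj1: "e \<in> grd U 1 \<Longrightarrow> e' \<in> grd U 1 \<Longrightarrow> \<pi> e = \<pi> e' \<Longrightarrow> e = e'"
  using \<pi>_U1 by metis

lemma \<pi>_surj: assumes k: "1 \<le> k" and g: "g \<in> grd G k" shows "\<exists>u\<in>grd U k. \<pi> u = g"
proof -
  let ?I = "\<pi> ` PU"
  have sub: "subspace G ?I" unfolding subspace_def
  proof (intro conjI ballI allI)
    show "?I \<subseteq> carrier G" using \<pi>_PU PG_c by blast
    show "zero G \<in> ?I" using UU.pos_subspace UU.subspace_zero \<pi>_zero by (metis image_eqI)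
    show "add G x y \<in> ?I" if xy: "x \<in> ?I" "y \<in> ?I" for x y
    proof -
      obtain a b where "a \<in> PU" "b \<in> PU" "x = \<pi> a" "y = \<pi> b" using xy by blast
      then show ?thesis using \<pi>_add UU.subspace_add[OF UU.pos_subspace] by (metis image_eqI)
    qed
    show "scal G c x \<in> ?I" if xy: "x \<in> ?I" for c x
    proof -
      obtain a where "a \<in> PU" "x = \<pi> a" using xy by blast
      then show ?thesis using \<pi>_scal UU.subspace_scal[OF UU.pos_subspace] by (metis image_eqI)
    qed
  qed
  have "lie_gen G (grd G 1) \<subseteq> ?I" unfolding lie_gen_def
  proof (rule Inter_lower, intro CollectI conjI ballI)
    show "subspace G ?I" by (rule sub)
    show "grd G 1 \<subseteq> ?I"
    proof
      fix x assume "x \<in> grd G 1"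
      then have "\<iota> x \<in> grd U 1" "\<pi> (\<iota> x) = x" using \<iota>_bij \<pi>_id unfolding bij_betw_def by auto
      then show "x \<in> ?I" using U1_PU by (metis image_eqI)
    qed
    show "brk G x y \<in> ?I" if xy: "x \<in> ?I" "y \<in> ?I" for x y
    proof -
      obtain a b where "a \<in> PU" "b \<in> PU" "x = \<pi> a" "y = \<pi> b" using xy by blast
      then show ?thesis using \<pi>_brk UU.pos_brk by (metis image_eqI)
    qed
  qed
  moreover have "g \<in> PG" using GG.grd_pos k g by blast
  ultimately obtain u where u: "u \<in> PU" "g = \<pi> u" using G_gen by auto
  have "\<pi> (UU.proj k u) = GG.proj k g" using \<pi>_proj u k by simp
  also have "\<dots> = g" using GG.proj_hom[OF g] by simp
  finally show ?thesis using UU.proj_grd PU_c u by blast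
qed

definition lift :: "int \<Rightarrow> 'g \<Rightarrow> 'u" where
  "lift k g = (if g = zero G then zero U else SOME u. u \<in> grd U k \<and> \<pi> u = g)"

lemma lift: assumes "1 \<le> k" "g \<in> grd G k" shows "lift k g \<in> grd U k" "\<pi> (lift k g) = g"
proof -
  have "lift k g \<in> grd U k \<and> \<pi> (lift k g) = g"
  proof (cases "g = zero G")
    case True then show ?thesis by (simp add: lift_def)
  next
    case False
    then show ?thesis unfolding lift_def using \<pi>_surj[OF assms] by (simp, metis (mono_tags, lifting) someI_ex)
  qed
  then show "lift k g \<in> grd U k" "\<pi> (lift k g) = g" by auto
qed

end


context setting begin

primrec psi :: "nat \<Rightarrow> 'g \<Rightarrow> 'u" where
  "psi 0 x = (THE u. u \<in> grd U 0 \<and> (\<forall>e\<in>grd U 1. brk U u e = lift 1 (brk G x (\<pi> e))))"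
| "psi (Suc n) x = (THE u. u \<in> grd U (- int (Suc n)) \<and> (\<forall>e\<in>grd U 1. brk U u e = psi n (brk G x (\<pi> e))))"

definition rho :: "int \<Rightarrow> 'g \<Rightarrow> 'u" where
  "rho k x = (if 1 \<le> k then lift k x else psi (nat (- k)) x)"

lemma rho_eq: assumes "k \<le> 0"
  shows "rho k x = (THE u. u \<in> grd U k \<and> (\<forall>e\<in>grd U 1. brk U u e = rho (k + 1) (brk G x (\<pi> e))))"
proof (cases "nat (- k)")
  case 0
  then have k: "k = 0" using assms by simp
  show ?thesis unfolding k by (simp add: rho_def)
next
  case (Suc m)
  have k1: "\<not> 1 \<le> k + 1" "nat (- (k + 1)) = m" using Suc assms by (simp_all add: nat_eq_iff)
  have r: "rho (k + 1) y = psi m y" for y unfolding rho_def using k1 by simp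
  have a: "rho k x = psi (Suc m) x" using Suc assms by (simp add: rho_def)
  have b: "- int (Suc m) = k" using Suc assms by (simp add: nat_eq_iff)
  show ?thesis unfolding a psi.simps b r ..
qed

definition linG :: "int \<Rightarrow> ('g \<Rightarrow> 'u) \<Rightarrow> bool" where
  "linG k h \<longleftrightarrow> (\<forall>x\<in>grd G k. h x \<in> grd U k) \<and>
     (\<forall>x\<in>grd G k. \<forall>y\<in>grd G k. h (add G x y) = add U (h x) (h y)) \<and>
     (\<forall>c. \<forall>x\<in>grd G k. h (scal G c x) = scal U c (h x))"

lemma rho1_lin: "linG 1 (rho 1)"
proof -
  have r: "rho 1 = lift 1" by (intro ext) (simp add: rho_def)
  show ?thesis unfolding linG_def r
  proof (intro conjI ballI allI)
    show "lift 1 x \<in> grd U 1" if "x \<in> grd G 1" for x using lift that by simp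
    show "lift 1 (add G x y) = add U (lift 1 x) (lift 1 y)" if "x \<in> grd G 1" "y \<in> grd G 1" for x y
    proof (rule \<pi>_inj1)
      show "lift 1 (add G x y) \<in> grd U 1" using lift that GG.add_grd by simp
      show "add U (lift 1 x) (lift 1 y) \<in> grd U 1" using lift that UU.add_grd by simp
      show "\<pi> (lift 1 (add G x y)) = \<pi> (add U (lift 1 x) (lift 1 y))"
        using lift that GG.add_grd \<pi>_add U1_PU by simp
    qed
    show "lift 1 (scal G c x) = scal U c (lift 1 x)" if "x \<in> grd G 1" for c x
    proof (rule \<pi>_inj1)
      show "lift 1 (scal G c x) \<in> grd U 1" using lift that GG.scal_grd by simp
      show "scal U c (lift 1 x) \<in> grd U 1" using lift that UU.scal_grd by simp
      show "\<pi> (lift 1 (scal G c x)) = \<pi> (scal U c (lift 1 x))"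
        using lift that GG.scal_grd \<pi>_scal U1_PU by simp
    qed
  qed
qed

definition spec :: "int \<Rightarrow> bool" where
  "spec k \<longleftrightarrow> (\<forall>x\<in>grd G k. \<forall>e\<in>grd U 1. brk U (rho k x) e = rho (k + 1) (brk G x (\<pi> e))) \<and>
     (\<forall>x\<in>grd G k. \<forall>u\<in>grd U k. (\<forall>e\<in>grd U 1. brk U u e = rho (k + 1) (brk G x (\<pi> e))) \<longrightarrow> u = rho k x) \<and>
     linG k (rho k)"

lemma univ_ex: "k \<le> 0 \<Longrightarrow> lin_map U U (grd U 1) (grd U (k + 1)) f \<Longrightarrow>
   \<exists>!x. x \<in> grd U k \<and> (\<forall>u\<in>grd U 1. brk U x u = f u)"
  using U_univ unfolding universal_lsa_def by blast

lemma rho_step: assumes k: "k \<le> 0" and L: "linG (k + 1) (rho (k + 1))"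
  shows "spec k"
proof -
  have Lg: "\<And>y. y \<in> grd G (k + 1) \<Longrightarrow> rho (k + 1) y \<in> grd U (k + 1)" using L unfolding linG_def by blast
  have La: "\<And>y z. y \<in> grd G (k + 1) \<Longrightarrow> z \<in> grd G (k + 1) \<Longrightarrow> rho (k + 1) (add G y z) = add U (rho (k + 1) y) (rho (k + 1) z)"
    using L unfolding linG_def by blast
  have Ls: "\<And>c y. y \<in> grd G (k + 1) \<Longrightarrow> rho (k + 1) (scal G c y) = scal U c (rho (k + 1) y)"
    using L unfolding linG_def by blast
  define P where "P x u \<longleftrightarrow> u \<in> grd U k \<and> (\<forall>e\<in>grd U 1. brk U u e = rho (k + 1) (brk G x (\<pi> e)))" for x u
  have ex: "\<exists>!u. P x u" if x: "x \<in> grd G k" for x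
  proof -
    have xc: "x \<in> carrier G" using x GG.grd_c by blast
    have "lin_map U U (grd U 1) (grd U (k + 1)) (\<lambda>e. rho (k + 1) (brk G x (\<pi> e)))"
      unfolding lin_map_def
    proof (intro conjI ballI allI)
      fix e assume e: "e \<in> grd U 1"
      have "brk G x (\<pi> e) \<in> grd G (k + 1)" using GG.brk_grd[OF x \<pi>_U1(1)[OF e]] .
      then show "rho (k + 1) (brk G x (\<pi> e)) \<in> grd U (k + 1)" using Lg by blast
    next
      fix e e' assume e: "e \<in> grd U 1" and e': "e' \<in> grd U 1"
      have g: "brk G x (\<pi> e) \<in> grd G (k + 1)" "brk G x (\<pi> e') \<in> grd G (k + 1)"
        using GG.brk_grd[OF x \<pi>_U1(1)[OF e]] GG.brk_grd[OF x \<pi>_U1(1)[OF e']] by auto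
      have "\<pi> (add U e e') = add G (\<pi> e) (\<pi> e')" using \<pi>_add U1_PU e e' by simp
      moreover have "\<pi> e \<in> carrier G" "\<pi> e' \<in> carrier G" using \<pi>_U1(1) e e' GG.grd_c by blast+
      ultimately have "brk G x (\<pi> (add U e e')) = add G (brk G x (\<pi> e)) (brk G x (\<pi> e'))"
        using GG.brk_add_r[of "\<pi> e" "\<pi> e'" x] xc by simp
      then show "rho (k + 1) (brk G x (\<pi> (add U e e'))) = add U (rho (k + 1) (brk G x (\<pi> e))) (rho (k + 1) (brk G x (\<pi> e')))"
        using La g by simp
    next
      fix c e assume e: "e \<in> grd U 1"
      have g: "brk G x (\<pi> e) \<in> grd G (k + 1)" using GG.brk_grd[OF x \<pi>_U1(1)[OF e]] .
      have "\<pi> (scal U c e) = scal G c (\<pi> e)" using \<pi>_scal U1_PU e by simp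
      moreover have "\<pi> e \<in> carrier G" using \<pi>_U1(1) e GG.grd_c by blast
      ultimately have "brk G x (\<pi> (scal U c e)) = scal G c (brk G x (\<pi> e))"
        using GG.brk_scal_r[of x "\<pi> e" c] xc by simp
      then show "rho (k + 1) (brk G x (\<pi> (scal U c e))) = scal U c (rho (k + 1) (brk G x (\<pi> e)))"
        using Ls g by simp
    qed
    then show ?thesis unfolding P_def using univ_ex[OF k] by blast
  qed
  have rhoP: "P x (rho k x)" if x: "x \<in> grd G k" for x
    unfolding rho_eq[OF k] P_def[symmetric] using theI'[OF ex[OF x]] .
  have uniq: "u = rho k x" if x: "x \<in> grd G k" and "P x u" for x u
    using ex[OF x] rhoP[OF x] that(2) by blast
  have lin: "linG k (rho k)"
    unfolding linG_def
  proof (intro conjI ballI allI)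
    show "rho k x \<in> grd U k" if "x \<in> grd G k" for x using rhoP[OF that] unfolding P_def by blast
    show "rho k (add G x y) = add U (rho k x) (rho k y)" if x: "x \<in> grd G k" and y: "y \<in> grd G k" for x y
    proof (rule uniq[symmetric])
      show "add G x y \<in> grd G k" using GG.add_grd x y by blast
      have px: "P x (rho k x)" and py: "P y (rho k y)" using rhoP x y by auto
      have rx: "rho k x \<in> grd U k" and ry: "rho k y \<in> grd U k" using px py unfolding P_def by auto
      show "P (add G x y) (add U (rho k x) (rho k y))" unfolding P_def
      proof (intro conjI ballI)
        show "add U (rho k x) (rho k y) \<in> grd U k" using UU.add_grd rx ry by blast
        fix e assume e: "e \<in> grd U 1"
        have g: "brk G x (\<pi> e) \<in> grd G (k + 1)" "brk G y (\<pi> e) \<in> grd G (k + 1)"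
          using GG.brk_grd[OF x \<pi>_U1(1)[OF e]] GG.brk_grd[OF y \<pi>_U1(1)[OF e]] by auto
        have "brk U (add U (rho k x) (rho k y)) e = add U (brk U (rho k x) e) (brk U (rho k y) e)"
          using UU.brk_add_l rx ry e UU.grd_c by blast
        also have "\<dots> = add U (rho (k + 1) (brk G x (\<pi> e))) (rho (k + 1) (brk G y (\<pi> e)))"
          using px py e unfolding P_def by simp
        also have "\<dots> = rho (k + 1) (add G (brk G x (\<pi> e)) (brk G y (\<pi> e)))" using La g by simp
        also have "add G (brk G x (\<pi> e)) (brk G y (\<pi> e)) = brk G (add G x y) (\<pi> e)"
          using GG.brk_add_l x y \<pi>_U1(1)[OF e] GG.grd_c by metis
        finally show "brk U (add U (rho k x) (rho k y)) e = rho (k + 1) (brk G (add G x y) (\<pi> e))" .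
      qed
    qed
    show "rho k (scal G c x) = scal U c (rho k x)" if x: "x \<in> grd G k" for c x
    proof (rule uniq[symmetric])
      show "scal G c x \<in> grd G k" using GG.scal_grd x by blast
      have px: "P x (rho k x)" using rhoP x by auto
      have rx: "rho k x \<in> grd U k" using px unfolding P_def by auto
      show "P (scal G c x) (scal U c (rho k x))" unfolding P_def
      proof (intro conjI ballI)
        show "scal U c (rho k x) \<in> grd U k" using UU.scal_grd rx by blast
        fix e assume e: "e \<in> grd U 1"
        have g: "brk G x (\<pi> e) \<in> grd G (k + 1)"
          using GG.brk_grd[OF x \<pi>_U1(1)[OF e]] by auto
        have "brk U (scal U c (rho k x)) e = scal U c (brk U (rho k x) e)"
          using UU.brk_scal_l rx e UU.grd_c by blast
        also have "\<dots> = scal U c (rho (k + 1) (brk G x (\<pi> e)))"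
          using px e unfolding P_def by simp
        also have "\<dots> = rho (k + 1) (scal G c (brk G x (\<pi> e)))" using Ls g by simp
        also have "scal G c (brk G x (\<pi> e)) = brk G (scal G c x) (\<pi> e)"
          using GG.brk_scal_l x \<pi>_U1(1)[OF e] GG.grd_c by metis
        finally show "brk U (scal U c (rho k x)) e = rho (k + 1) (brk G (scal G c x) (\<pi> e))" .
      qed
    qed
  qed
  show ?thesis unfolding spec_def
  proof (intro conjI ballI impI)
    show "brk U (rho k x) e = rho (k + 1) (brk G x (\<pi> e))" if "x \<in> grd G k" "e \<in> grd U 1" for x e
      using rhoP[OF that(1)] that(2) unfolding P_def by blast
    show "u = rho k x" if "x \<in> grd G k" "u \<in> grd U k" "\<forall>e\<in>grd U 1. brk U u e = rho (k + 1) (brk G x (\<pi> e))" for x u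
      using uniq[OF that(1)] that(2,3) unfolding P_def by blast
    show "linG k (rho k)" by (rule lin)
  qed
qed

lemma spec_all: "spec (- int n)"
proof (induct n)
  case 0
  show ?case using rho_step[of 0] rho1_lin by simp
next
  case (Suc n)
  have "linG (- int n) (rho (- int n))" using Suc unfolding spec_def by blast
  then show ?case using rho_step[of "- int (Suc n)"] by simp
qed

lemma spec: "k \<le> 0 \<Longrightarrow> spec k"
  using spec_all[of "nat (- k)"] by simp

lemma rho_lin: "k \<le> 0 \<Longrightarrow> linG k (rho k)" using spec unfolding spec_def by blast
lemma rho_grd: "k \<le> 0 \<Longrightarrow> x \<in> grd G k \<Longrightarrow> rho k x \<in> grd U k"
  using rho_lin unfolding linG_def by blast
lemma rho_add: "k \<le> 0 \<Longrightarrow> x \<in> grd G k \<Longrightarrow> y \<in> grd G k \<Longrightarrow> rho k (add G x y) = add U (rho k x) (rho k y)"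
  using rho_lin unfolding linG_def by blast
lemma rho_scal: "k \<le> 0 \<Longrightarrow> x \<in> grd G k \<Longrightarrow> rho k (scal G c x) = scal U c (rho k x)"
  using rho_lin unfolding linG_def by blast
lemma rho_brk: "k \<le> 0 \<Longrightarrow> x \<in> grd G k \<Longrightarrow> e \<in> grd U 1 \<Longrightarrow> brk U (rho k x) e = rho (k + 1) (brk G x (\<pi> e))"
  using spec unfolding spec_def by blast
lemma rho_uniq: "k \<le> 0 \<Longrightarrow> x \<in> grd G k \<Longrightarrow> u \<in> grd U k \<Longrightarrow>
   (\<And>e. e \<in> grd U 1 \<Longrightarrow> brk U u e = rho (k + 1) (brk G x (\<pi> e))) \<Longrightarrow> u = rho k x"
  using spec unfolding spec_def by blast

lemma rho_zero[simp]: "rho k (zero G) = zero U"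
proof (cases "1 \<le> k")
  case True then show ?thesis by (simp add: rho_def lift_def)
next
  case False
  have "rho k (scal G 0 (zero G)) = scal U 0 (rho k (zero G))" by (rule rho_scal) (use False in auto)
  moreover have "rho k (zero G) \<in> carrier U" using rho_grd[of k "zero G"] False UU.grd_c by simp
  ultimately show ?thesis by simp
qed

end

context setting begin

definition Phi :: "int \<Rightarrow> 'u \<Rightarrow> 'g \<Rightarrow> bool" where
  "Phi n u x \<longleftrightarrow> u \<in> grd U n \<and> x \<in> grd G n \<and> (if 1 \<le> n then \<pi> u = x else u = rho n x)"

lemma Phi_grd: "Phi n u x \<Longrightarrow> u \<in> grd U n" "Phi n u x \<Longrightarrow> x \<in> grd G n"
  unfolding Phi_def by auto
lemma Phi_c: "Phi n u x \<Longrightarrow> u \<in> carrier U" "Phi n u x \<Longrightarrow> x \<in> carrier G"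
  using Phi_grd UU.grd_c GG.grd_c by blast+

lemma Phi_rho: assumes "x \<in> grd G n" shows "Phi n (rho n x) x"
proof (cases "1 \<le> n")
  case True
  then show ?thesis unfolding Phi_def rho_def using lift[OF True assms] assms by simp
next
  case False
  then show ?thesis unfolding Phi_def using rho_grd[of n x] assms by simp
qed

lemma Phi_zero: "Phi n (zero U) (zero G)"
  using Phi_rho[of "zero G" n] by simp

lemma Phi_pos: "1 \<le> n \<Longrightarrow> u \<in> grd U n \<Longrightarrow> Phi n u (\<pi> u)"
  unfolding Phi_def using \<pi>_grd by simp

lemma grd_PU: "1 \<le> n \<Longrightarrow> u \<in> grd U n \<Longrightarrow> u \<in> PU" using UU.grd_pos by blast

lemma Phi_add: assumes "Phi n u x" "Phi n v y" shows "Phi n (add U u v) (add G x y)"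
proof (cases "1 \<le> n")
  case True
  have g: "u \<in> grd U n" "v \<in> grd U n" "x \<in> grd G n" "y \<in> grd G n" using assms Phi_grd by auto
  have "\<pi> u = x" "\<pi> v = y" using assms True unfolding Phi_def by auto
  then have "\<pi> (add U u v) = add G x y" using \<pi>_add grd_PU[OF True] g by simp
  then show ?thesis unfolding Phi_def using True g UU.add_grd GG.add_grd by simp
next
  case False
  have g: "u \<in> grd U n" "v \<in> grd U n" "x \<in> grd G n" "y \<in> grd G n" using assms Phi_grd by auto
  have "u = rho n x" "v = rho n y" using assms False unfolding Phi_def by auto
  then have "add U u v = rho n (add G x y)" using rho_add False g by simp
  then show ?thesis unfolding Phi_def using False g UU.add_grd[OF g(1,2)] GG.add_grd[OF g(3,4)] by simp
qed

lemma Phi_scal: assumes "Phi n u x" shows "Phi n (scal U c u) (scal G c x)"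
proof (cases "1 \<le> n")
  case True
  have g: "u \<in> grd U n" "x \<in> grd G n" using assms Phi_grd by auto
  have "\<pi> u = x" using assms True unfolding Phi_def by auto
  then have "\<pi> (scal U c u) = scal G c x" using \<pi>_scal grd_PU[OF True] g by simp
  then show ?thesis unfolding Phi_def using True g UU.scal_grd GG.scal_grd by simp
next
  case False
  have g: "u \<in> grd U n" "x \<in> grd G n" using assms Phi_grd by auto
  have "u = rho n x" using assms False unfolding Phi_def by auto
  then have "scal U c u = rho n (scal G c x)" using rho_scal False g by simp
  then show ?thesis unfolding Phi_def using False g UU.scal_grd[OF g(1), of c] GG.scal_grd[OF g(2), of c] by simp
qed

lemma Phi_uniq1: assumes "n \<le> 1" "Phi n u x" "Phi n v x" shows "u = v"
proof (cases "n = 1")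
  case True
  then show ?thesis using assms \<pi>_inj1 unfolding Phi_def by auto
next
  case False
  then show ?thesis using assms unfolding Phi_def by auto
qed

lemma C1: assumes "1 \<le> i" "1 \<le> j" "Phi i a x" "Phi j b y"
  shows "Phi (i + j) (brk U a b) (brk G x y)"
proof -
  have g: "a \<in> grd U i" "b \<in> grd U j" "x \<in> grd G i" "y \<in> grd G j" using assms Phi_grd by auto
  have "\<pi> a = x" "\<pi> b = y" using assms unfolding Phi_def by auto
  then have "\<pi> (brk U a b) = brk G x y" using \<pi>_brk grd_PU assms(1,2) g by simp
  then show ?thesis unfolding Phi_def using assms(1,2) g UU.brk_grd GG.brk_grd by simp
qed

lemma Phi_anti: assumes "Phi (j + i) (brk U b a) (brk G y x)" "Phi i a x" "Phi j b y"
  shows "Phi (i + j) (brk U a b) (brk G x y)"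
proof -
  have g: "a \<in> grd U i" "b \<in> grd U j" "x \<in> grd G i" "y \<in> grd G j" using assms Phi_grd by auto
  have "Phi (j + i) (scal U (- ssign i j) (brk U b a)) (scal G (- ssign i j) (brk G y x))"
    using Phi_scal[OF assms(1)] .
  moreover have "brk U a b = scal U (- ssign i j) (brk U b a)" using UU.anti g by blast
  moreover have "brk G x y = scal G (- ssign i j) (brk G y x)" using GG.anti g by blast
  ultimately show ?thesis by (simp add: add.commute)
qed

inductive Wg :: "int \<Rightarrow> 'u \<Rightarrow> bool" where
  Wg_gen: "e \<in> grd U 1 \<Longrightarrow> Wg 1 e"
| Wg_zero: "Wg m (zero U)"
| Wg_add: "Wg m a \<Longrightarrow> Wg m b \<Longrightarrow> Wg m (add U a b)"
| Wg_scal: "Wg m a \<Longrightarrow> Wg m (scal U c a)"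
| Wg_brk: "Wg p a \<Longrightarrow> Wg q b \<Longrightarrow> Wg (p + q) (brk U a b)"

lemma Wg_grd: "Wg m a \<Longrightarrow> a \<in> grd U m \<and> (1 \<le> m \<or> a = zero U)"
proof (induct rule: Wg.induct)
  case (Wg_gen e) then show ?case by simp
next
  case (Wg_zero m) then show ?case by simp
next
  case (Wg_add m a b) then show ?case using UU.add_grd UU.grd_c by auto
next
  case (Wg_scal m a c) then show ?case using UU.scal_grd by auto
next
  case (Wg_brk p a q b)
  have g: "brk U a b \<in> grd U (p + q)" using Wg_brk UU.brk_grd by blast
  show ?case
  proof (cases "1 \<le> p \<and> 1 \<le> q")
    case True then show ?thesis using g by simp
  next
    case False
    then have "a = zero U \<or> b = zero U" using Wg_brk by auto
    then have "brk U a b = zero U" using Wg_brk UU.grd_c by auto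
    then show ?thesis using g by simp
  qed
qed

lemma Wg_PU: "Wg m a \<Longrightarrow> a \<in> PU"
  using Wg_grd grd_PU UU.subspace_zero[OF UU.pos_subspace] by metis

lemma pos_part_U: "pos_part U = U\<lparr>carrier := span U (\<Union>k. UU.W2 k), grd := UU.W2\<rparr>"
proof -
  have "UU.W2 = (\<lambda>k. if 1 \<le> k then grd U k else {zero U})" by (rule ext) (simp add: UU.W2_def)
  then show ?thesis unfolding pos_part_def UU.span_pos_eq by simp
qed

lemma pos_lsa: "lie_superalgebra (pos_part U)"
  unfolding pos_part_U by (rule UU.sub_lsa[OF UU.W2_sub UU.W2_grd UU.W2_brk])

lemma gen: assumes m: "1 \<le> m" and b: "b \<in> grd U m" shows "Wg m b"
proof -
  define Ws where "Ws k = {a. Wg k a}" for k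
  have Wsub: "subspace U (Ws k)" for k
    unfolding subspace_def Ws_def using Wg_grd UU.grd_c Wg_zero Wg_add Wg_scal by blast
  have Wgr: "Ws k \<subseteq> grd U k" for k unfolding Ws_def using Wg_grd by blast
  have Wb: "a \<in> Ws i \<Longrightarrow> c \<in> Ws j \<Longrightarrow> brk U a c \<in> Ws (i + j)" for i j a c
    unfolding Ws_def using Wg_brk by blast
  define M where "M = U\<lparr>carrier := span U (\<Union>k. Ws k), grd := Ws\<rparr>"
  have M: "lie_superalgebra M" unfolding M_def by (rule UU.sub_lsa[OF Wsub Wgr Wb])
  have free: "free_pos_part U" using U_univ unfolding universal_lsa_def by blast
  have lm: "lin_map U M (grd U 1) (grd M 1) id"
    unfolding lin_map_def M_def Ws_def using Wg_gen by simp
  obtain \<phi> where \<phi>: "lsa_hom (pos_part U) M \<phi>" "\<forall>u\<in>grd U 1. \<phi> u = id u"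
    using free M lm unfolding free_pos_part_def by blast
  have spanM: "span U (\<Union>k. Ws k) \<subseteq> PU"
  proof (rule UU.span_min[OF UU.pos_subspace])
    show "(\<Union>k. Ws k) \<subseteq> PU" unfolding Ws_def using Wg_PU by blast
  qed
  have h1: "lsa_hom (pos_part U) (pos_part U) \<phi>"
    unfolding lsa_hom_def
  proof (intro conjI)
    have l: "lin_map (pos_part U) M (carrier (pos_part U)) (carrier M) \<phi>"
      using \<phi>(1) unfolding lsa_hom_def by blast
    show "lin_map (pos_part U) (pos_part U) (carrier (pos_part U)) (carrier (pos_part U)) \<phi>"
      using l spanM unfolding lin_map_def M_def by auto
    have "\<forall>k. \<forall>x\<in>grd (pos_part U) k. \<phi> x \<in> grd M k" using \<phi>(1) unfolding lsa_hom_def by blast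
    then show "\<forall>k. \<forall>x\<in>grd (pos_part U) k. \<phi> x \<in> grd (pos_part U) k"
      unfolding M_def Ws_def using Wg_grd by fastforce
    show "\<forall>x\<in>carrier (pos_part U). \<forall>y\<in>carrier (pos_part U). \<phi> (brk (pos_part U) x y) = brk (pos_part U) (\<phi> x) (\<phi> y)"
      using \<phi>(1) unfolding lsa_hom_def M_def by simp
  qed
  have h2: "lsa_hom (pos_part U) (pos_part U) id"
    unfolding lsa_hom_def lin_map_def by simp
  have lm2: "lin_map U (pos_part U) (grd U 1) (grd (pos_part U) 1) id"
    unfolding lin_map_def by simp
  have "\<forall>x\<in>carrier (pos_part U). \<phi> x = id x"
    using free pos_lsa lm2 h1 h2 \<phi>(2) unfolding free_pos_part_def by blast
  moreover have bP: "b \<in> PU" using grd_PU m b by blast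
  ultimately have "b = \<phi> b" by simp
  moreover have "\<phi> b \<in> carrier M" using \<phi>(1) bP unfolding lsa_hom_def lin_map_def by simp
  ultimately have "b \<in> sums U Ws" unfolding M_def using UU.sums_span[OF Wsub] by simp
  then obtain S f where S: "finite S" "\<forall>k\<in>S. f k \<in> Ws k" "b = fs U f S" unfolding sums_def by blast
  have Sg: "\<forall>k\<in>S. f k \<in> grd U k" using S Wgr by blast
  have "UU.proj m b = (if m \<in> S then f m else zero U)" using UU.proj_fs[OF S(1) Sg] S(3) by simp
  moreover have "UU.proj m b = b" using UU.proj_hom[OF b] by simp
  ultimately show ?thesis using S(2) Wg_zero unfolding Ws_def by (cases "m \<in> S") auto
qed

end

context setting begin

lemma Phi_deg: "n = m \<Longrightarrow> Phi n u x \<Longrightarrow> Phi m u x" by simp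

lemma KL: "Wg m b \<Longrightarrow> k \<le> 0 \<Longrightarrow> Phi k a x \<Longrightarrow> Phi (k + m) (brk U a b) (brk G x (\<pi> b))"
proof (induct m b arbitrary: k a x rule: Wg.induct)
  case (Wg_gen e)
  have a: "a = rho k x" and x: "x \<in> grd G k" using Wg_gen unfolding Phi_def by auto
  have "brk U a e = rho (k + 1) (brk G x (\<pi> e))" using rho_brk[OF Wg_gen(2) x Wg_gen(1)] a by simp
  moreover have "brk G x (\<pi> e) \<in> grd G (k + 1)" using GG.brk_grd[OF x \<pi>_U1(1)[OF Wg_gen(1)]] .
  ultimately show ?case using Phi_rho by simp
next
  case (Wg_zero m)
  have "a \<in> carrier U" "x \<in> carrier G" using Phi_c Wg_zero by auto
  then show ?case using Phi_zero by simp
next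
  case (Wg_add m b1 b2)
  have P1: "Phi (k + m) (brk U a b1) (brk G x (\<pi> b1))" using Wg_add by blast
  have P2: "Phi (k + m) (brk U a b2) (brk G x (\<pi> b2))" using Wg_add by blast
  have bP: "b1 \<in> PU" "b2 \<in> PU" using Wg_PU Wg_add by blast+
  have c: "a \<in> carrier U" "x \<in> carrier G" using Phi_c Wg_add by auto
  have bc: "b1 \<in> carrier U" "b2 \<in> carrier U" "\<pi> b1 \<in> carrier G" "\<pi> b2 \<in> carrier G"
    using bP PU_c \<pi>_PU PG_c by auto
  have "brk U a (add U b1 b2) = add U (brk U a b1) (brk U a b2)" using UU.brk_add_r bc c by blast
  moreover have "brk G x (\<pi> (add U b1 b2)) = add G (brk G x (\<pi> b1)) (brk G x (\<pi> b2))"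
    using \<pi>_add[OF bP] GG.brk_add_r bc c by simp
  ultimately show ?case using Phi_add[OF P1 P2] by simp
next
  case (Wg_scal m b c)
  have P1: "Phi (k + m) (brk U a b) (brk G x (\<pi> b))" using Wg_scal by blast
  have bP: "b \<in> PU" using Wg_PU Wg_scal by blast
  have cc: "a \<in> carrier U" "x \<in> carrier G" using Phi_c Wg_scal by auto
  have bc: "b \<in> carrier U" "\<pi> b \<in> carrier G" using bP PU_c \<pi>_PU PG_c by auto
  have "brk U a (scal U c b) = scal U c (brk U a b)" using UU.brk_scal_r bc cc by blast
  moreover have "brk G x (\<pi> (scal U c b)) = scal G c (brk G x (\<pi> b))"
    using \<pi>_scal[OF bP] GG.brk_scal_r bc cc by simp
  ultimately show ?case using Phi_scal[OF P1] by simp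
next
  case (Wg_brk p c q d)
  have k: "k \<le> 0" and Pa: "Phi k a x" using Wg_brk by auto
  have ag: "a \<in> grd U k" "x \<in> grd G k" using Pa Phi_grd by auto
  have cg: "c \<in> grd U p" "1 \<le> p \<or> c = zero U" using Wg_grd Wg_brk(1) by auto
  have dg: "d \<in> grd U q" "1 \<le> q \<or> d = zero U" using Wg_grd Wg_brk(3) by auto
  have IHc: "\<And>k a x. k \<le> 0 \<Longrightarrow> Phi k a x \<Longrightarrow> Phi (k + p) (brk U a c) (brk G x (\<pi> c))" using Wg_brk by blast
  have IHd: "\<And>k a x. k \<le> 0 \<Longrightarrow> Phi k a x \<Longrightarrow> Phi (k + q) (brk U a d) (brk G x (\<pi> d))" using Wg_brk by blast
  show ?case
  proof (cases "1 \<le> p \<and> 1 \<le> q")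
    case False
    then have "c = zero U \<or> d = zero U" using cg dg by auto
    then have "brk U c d = zero U" using cg dg UU.grd_c by auto
    moreover have "a \<in> carrier U" "x \<in> carrier G" using ag UU.grd_c GG.grd_c by auto
    ultimately show ?thesis using Phi_zero by simp
  next
    case True
    then have p: "1 \<le> p" and q: "1 \<le> q" by auto
    have cP: "c \<in> PU" and dP: "d \<in> PU" using grd_PU p q cg dg by auto
    have pc: "Phi p c (\<pi> c)" and pd: "Phi q d (\<pi> d)" using Phi_pos p q cg dg by auto
    have pcg: "\<pi> c \<in> grd G p" and pdg: "\<pi> d \<in> grd G q" using pc pd Phi_grd by auto
    have cc: "c \<in> carrier U" "d \<in> carrier U" "\<pi> d \<in> carrier G" using cg dg pdg UU.grd_c GG.grd_c by auto
    define s :: 'k where "s = ssign k p"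
    have jU: "brk U a (brk U c d) = add U (brk U (brk U a c) d) (scal U s (brk U c (brk U a d)))"
      unfolding s_def using UU.jacobi[OF ag(1) cg(1) cc(2)] .
    have jG: "brk G x (brk G (\<pi> c) (\<pi> d)) = add G (brk G (brk G x (\<pi> c)) (\<pi> d)) (scal G s (brk G (\<pi> c) (brk G x (\<pi> d))))"
      unfolding s_def using GG.jacobi[OF ag(2) pcg cc(3)] .
    have \<pi>cd: "\<pi> (brk U c d) = brk G (\<pi> c) (\<pi> d)" using \<pi>_brk cP dP by blast
    have Pac: "Phi (k + p) (brk U a c) (brk G x (\<pi> c))" using IHc[OF k Pa] .
    have T1: "Phi (k + (p + q)) (brk U (brk U a c) d) (brk G (brk G x (\<pi> c)) (\<pi> d))"
    proof (cases "k + p \<le> 0")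
      case True
      then show ?thesis using IHd[OF True Pac] by (simp add: add.assoc)
    next
      case False
      then show ?thesis using C1[OF _ q Pac pd] by (simp add: add.assoc)
    qed
    have Pad: "Phi (k + q) (brk U a d) (brk G x (\<pi> d))" using IHd[OF k Pa] .
    have T2: "Phi (k + (p + q)) (brk U c (brk U a d)) (brk G (\<pi> c) (brk G x (\<pi> d)))"
    proof (cases "k + q \<le> 0")
      case True
      have "Phi (k + q + p) (brk U (brk U a d) c) (brk G (brk G x (\<pi> d)) (\<pi> c))" using IHc[OF True Pad] .
      then have "Phi (p + (k + q)) (brk U c (brk U a d)) (brk G (\<pi> c) (brk G x (\<pi> d)))"
        by (rule Phi_anti[OF _ pc Pad])
      then show ?thesis by (simp add: algebra_simps)
    next
      case False
      then show ?thesis using C1[OF p _ pc Pad] by (simp add: algebra_simps)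
    qed
    have "Phi (k + (p + q)) (add U (brk U (brk U a c) d) (scal U s (brk U c (brk U a d))))
        (add G (brk G (brk G x (\<pi> c)) (\<pi> d)) (scal G s (brk G (\<pi> c) (brk G x (\<pi> d)))))"
      by (rule Phi_add[OF T1 Phi_scal[OF T2]])
    then show ?thesis using jU jG \<pi>cd by simp
  qed
qed

lemma HLm: assumes "1 \<le> i \<or> 1 \<le> j" "Phi i a x" "Phi j b y"
  shows "Phi (i + j) (brk U a b) (brk G x y)"
proof -
  have mix: "Phi (i' + j') (brk U a' b') (brk G x' y')"
    if "i' \<le> 0" "1 \<le> j'" "Phi i' a' x'" "Phi j' b' y'" for i' j' a' b' x' y'
  proof -
    have bg: "b' \<in> grd U j'" using that Phi_grd by blast
    have "y' = \<pi> b'" using that unfolding Phi_def by simp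
    then show ?thesis using KL[OF gen[OF that(2) bg] that(1,3)] by simp
  qed
  show ?thesis
  proof (cases "1 \<le> i")
    case True
    show ?thesis
    proof (cases "1 \<le> j")
      case True then show ?thesis using C1 \<open>1 \<le> i\<close> assms by blast
    next
      case False
      have "Phi (j + i) (brk U b a) (brk G y x)" by (rule mix[OF _ True assms(3,2)]) (use False in simp)
      then show ?thesis using Phi_anti assms by blast
    qed
  next
    case False
    then show ?thesis using mix assms by simp
  qed
qed

lemma HLn_aux: "nat (- (i + j)) = N \<Longrightarrow> i \<le> 0 \<Longrightarrow> j \<le> 0 \<Longrightarrow> Phi i a x \<Longrightarrow> Phi j b y \<Longrightarrow>
   Phi (i + j) (brk U a b) (brk G x y)"
proof (induct N arbitrary: i j a b x y rule: less_induct)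
  case (less N i j a b x y)
  note i = less(3) and j = less(4) and N = less(2) and Pa = less(5) and Pb = less(6)
  show ?case
  proof -
    define n where "n = i + j"
    have any: "Phi (n + 1) (brk U a' b') (brk G x' y')"
      if "i' + j' = n + 1" "Phi i' a' x'" "Phi j' b' y'" for i' j' a' b' x' y'
    proof (cases "1 \<le> i' \<or> 1 \<le> j'")
      case True then show ?thesis using HLm that by metis
    next
      case False
      then have "i' \<le> 0" "j' \<le> 0" by auto
      moreover have "nat (- (i' + j')) < N" using that(1) N False unfolding n_def by auto
      ultimately show ?thesis using less(1)[OF _ refl _ _ that(2,3)] that(1) by auto
    qed
    have ag: "a \<in> grd U i" "x \<in> grd G i" and bg: "b \<in> grd U j" "y \<in> grd G j" using Pa Pb Phi_grd by auto
    have ar: "a = rho i x" and br: "b = rho j y" using Pa Pb i j unfolding Phi_def by auto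
    have abg: "brk U a b \<in> grd U n" and xyg: "brk G x y \<in> grd G n"
      unfolding n_def using UU.brk_grd GG.brk_grd ag bg by auto
    have "brk U a b = rho n (brk G x y)"
    proof (rule rho_uniq)
      show "n \<le> 0" unfolding n_def using i j by simp
      show "brk G x y \<in> grd G n" by (rule xyg)
      show "brk U a b \<in> grd U n" by (rule abg)
      fix e assume e: "e \<in> grd U 1"
      have ec: "e \<in> carrier U" using e UU.grd_c by blast
      have pe: "\<pi> e \<in> grd G 1" using \<pi>_U1(1)[OF e] .
      have pec: "\<pi> e \<in> carrier G" using pe GG.grd_c by blast
      have Pbe: "Phi (j + 1) (brk U b e) (brk G y (\<pi> e))"
        using rho_brk[OF j bg(2) e] br Phi_rho[OF GG.brk_grd[OF bg(2) pe]] by simp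
      have Pae: "Phi (i + 1) (brk U a e) (brk G x (\<pi> e))"
        using rho_brk[OF i ag(2) e] ar Phi_rho[OF GG.brk_grd[OF ag(2) pe]] by simp
      have P1: "Phi (n + 1) (brk U a (brk U b e)) (brk G x (brk G y (\<pi> e)))"
        by (rule any[OF _ Pa Pbe]) (simp add: n_def)
      have P2: "Phi (n + 1) (brk U b (brk U a e)) (brk G y (brk G x (\<pi> e)))"
        by (rule any[OF _ Pb Pae]) (simp add: n_def)
      have P3: "Phi (n + 1) (add U (brk U a (brk U b e)) (scal U (- ssign i j) (brk U b (brk U a e))))
          (add G (brk G x (brk G y (\<pi> e))) (scal G (- ssign i j) (brk G y (brk G x (\<pi> e)))))"
        by (rule Phi_add[OF P1 Phi_scal[OF P2]])
      have "brk U (brk U a b) e = add U (brk U a (brk U b e)) (scal U (- ssign i j) (brk U b (brk U a e)))"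
        by (rule UU.jac_rearr[OF ag(1) bg(1) ec])
      moreover have "brk G (brk G x y) (\<pi> e) = add G (brk G x (brk G y (\<pi> e))) (scal G (- ssign i j) (brk G y (brk G x (\<pi> e))))"
        by (rule GG.jac_rearr[OF ag(2) bg(2) pec])
      ultimately have P4: "Phi (n + 1) (brk U (brk U a b) e) (brk G (brk G x y) (\<pi> e))" using P3 by simp
      have P5: "Phi (n + 1) (rho (n + 1) (brk G (brk G x y) (\<pi> e))) (brk G (brk G x y) (\<pi> e))"
        by (rule Phi_rho[OF GG.brk_grd[OF xyg pe]])
      show "brk U (brk U a b) e = rho (n + 1) (brk G (brk G x y) (\<pi> e))"
        by (rule Phi_uniq1[OF _ P4 P5]) (use i j n_def in simp)
    qed
    then show "Phi (i + j) (brk U a b) (brk G x y)"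
      unfolding Phi_def n_def[symmetric] using abg xyg i j n_def by simp
  qed
qed

lemma HL: assumes "Phi i a x" "Phi j b y" shows "Phi (i + j) (brk U a b) (brk G x y)"
proof (cases "1 \<le> i \<or> 1 \<le> j")
  case True then show ?thesis using HLm assms by blast
next
  case False
  then show ?thesis using HLn_aux[OF refl _ _ assms] by auto
qed

end

context vsp begin

lemma add_left_comm: "x \<in> carrier L \<Longrightarrow> y \<in> carrier L \<Longrightarrow> z \<in> carrier L \<Longrightarrow>
  add L x (add L y z) = add L y (add L x z)"
  by (metis add_assoc add_comm)

lemma neg_add_cancel: "x \<in> carrier L \<Longrightarrow> add L (neg L x) x = zero L"
  using add_neg add_comm neg_c by metis

lemma sub_sub: assumes "u \<in> carrier L" "v \<in> carrier L" "w \<in> carrier L"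
  shows "add L (add L u (neg L v)) (add L v (neg L w)) = add L u (neg L w)"
proof -
  have "add L (add L u (neg L v)) (add L v (neg L w)) = add L u (add L (add L (neg L v) v) (neg L w))"
    using assms by (simp add: add_assoc)
  also have "\<dots> = add L u (neg L w)" using assms by (simp add: neg_add_cancel)
  finally show ?thesis .
qed

lemma sub_add: assumes "u \<in> carrier L" "v \<in> carrier L" "u' \<in> carrier L" "v' \<in> carrier L"
  shows "add L (add L u v) (neg L (add L u' v')) = add L (add L u (neg L u')) (add L v (neg L v'))"
proof -
  have "add L (add L u v) (neg L (add L u' v')) = add L (add L u v) (add L (neg L u') (neg L v'))"
    using assms by (simp add: neg_add)
  also have "\<dots> = add L u (add L v (add L (neg L u') (neg L v')))" using assms by (simp add: add_assoc)
  also have "\<dots> = add L u (add L (neg L u') (add L v (neg L v')))" using assms by (simp add: add_left_comm)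
  also have "\<dots> = add L (add L u (neg L u')) (add L v (neg L v'))" using assms by (simp add: add_assoc)
  finally show ?thesis .
qed

lemma neg_sub: assumes "u \<in> carrier L" "v \<in> carrier L"
  shows "neg L (add L u (neg L v)) = add L v (neg L u)"
  using assms by (simp add: neg_add add_comm)

lemma scal_sub: assumes "u \<in> carrier L" "v \<in> carrier L"
  shows "add L (scal L c u) (neg L (scal L c v)) = scal L c (add L u (neg L v))"
proof -
  have "neg L (scal L c v) = scal L c (neg L v)" using assms by (simp add: neg_def scal_scal mult.commute)
  then show ?thesis using assms by (simp add: scal_add_r)
qed

lemma sub_zero: "u \<in> carrier L \<Longrightarrow> add L u (neg L (zero L)) = u" by simp

lemma add_sub_cancel: "u \<in> carrier L \<Longrightarrow> d \<in> carrier L \<Longrightarrow> add L (add L u d) (neg L u) = d"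
  by (metis add_assoc add_comm add_neg add_zl neg_c)

lemma sub_add_cancel: "u \<in> carrier L \<Longrightarrow> a \<in> carrier L \<Longrightarrow> add L u (add L a (neg L u)) = a"
  by (metis add_assoc add_comm add_neg add_zr neg_c)

end

context setting begin

definition D :: "'u set" where "D = {x \<in> PU. \<pi> x = zero G}"
definition N :: "'u set" where "N = idealiser U D"

lemma D_PU: "d \<in> D \<Longrightarrow> d \<in> PU" unfolding D_def by blast
lemma D_c: "d \<in> D \<Longrightarrow> d \<in> carrier U" using D_PU PU_c by blast

lemma D_sub: "subspace U D"
  unfolding subspace_def
proof (intro conjI ballI allI)
  show "D \<subseteq> carrier U" using D_c by blast
  show "zero U \<in> D" unfolding D_def using UU.subspace_zero[OF UU.pos_subspace] by simp
  show "add U x y \<in> D" if "x \<in> D" "y \<in> D" for x y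
    using that \<pi>_add UU.subspace_add[OF UU.pos_subspace] unfolding D_def by simp
  show "scal U c x \<in> D" if "x \<in> D" for c x
    using that \<pi>_scal UU.subspace_scal[OF UU.pos_subspace] unfolding D_def by simp
qed

lemma Phi_zero_D: assumes "Phi n w (zero G)" shows "w \<in> D"
proof (cases "1 \<le> n")
  case True
  have w: "w \<in> grd U n" "\<pi> w = zero G" using assms True unfolding Phi_def by auto
  have "w \<in> PU" by (rule grd_PU[OF True w(1)])
  then show ?thesis unfolding D_def using w(2) by blast
next
  case False
  then have "w = rho n (zero G)" using assms unfolding Phi_def by auto
  then have "w = zero U" by simp
  then show ?thesis using UU.subspace_zero[OF D_sub] by simp
qed

lemma D_decomp: assumes d: "d \<in> D"
  obtains S where "finite S" "S \<subseteq> {1..}" "d = fs U (\<lambda>k. UU.proj k d) S"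
    "\<And>k. k \<in> S \<Longrightarrow> Phi k (UU.proj k d) (zero G)"
proof -
  have dP: "d \<in> PU" using D_PU d by blast
  obtain S where S: "finite S" "S \<subseteq> {1..}" "d = fs U (\<lambda>k. UU.proj k d) S"
      "\<And>k. k \<notin> S \<Longrightarrow> UU.proj k d = zero U"
    using UU.pos_decomp[OF dP] by metis
  have e2: "\<pi> d = zero G" using d unfolding D_def by blast
  have PS: "Phi k (UU.proj k d) (zero G)" if k: "k \<in> S" for k
  proof -
    have k1: "1 \<le> k" using k S(2) by auto
    have pg: "UU.proj k d \<in> grd U k" by (rule UU.proj_grd[OF PU_c[OF dP]])
    have e1: "\<pi> (UU.proj k d) = GG.proj k (\<pi> d)" by (rule \<pi>_proj[OF dP k1, symmetric])
    have "\<pi> (UU.proj k d) = zero G" unfolding e1 e2 by (rule GG.proj_zero)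
    then show ?thesis using Phi_pos[OF k1 pg] by simp
  qed
  show ?thesis by (rule that[OF S(1) S(2) S(3) PS])
qed

lemma brk_D_left: assumes d: "d \<in> D" and v: "Phi k v y" shows "brk U d v \<in> D"
proof -
  obtain S where S: "finite S" "S \<subseteq> {1..}" "d = fs U (\<lambda>k. UU.proj k d) S"
    "\<And>m. m \<in> S \<Longrightarrow> Phi m (UU.proj m d) (zero G)" using D_decomp[OF d] by metis
  have vc: "v \<in> carrier U" and yc: "y \<in> carrier G" using Phi_c v by auto
  have pc: "\<And>m. m \<in> S \<Longrightarrow> UU.proj m d \<in> carrier U" using S(4) Phi_c by blast
  have "brk U d v = fs U (\<lambda>m. brk U (UU.proj m d) v) S"
    by (subst S(3), rule UU.brk_fs_l) (use pc vc in auto)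
  also have "\<dots> \<in> D"
  proof (rule UU.fs_closed_sub[OF D_sub])
    fix m assume m: "m \<in> S"
    have "Phi (m + k) (brk U (UU.proj m d) v) (brk G (zero G) y)" using HL[OF S(4)[OF m] v] .
    then have "Phi (m + k) (brk U (UU.proj m d) v) (zero G)" using yc by simp
    then show "brk U (UU.proj m d) v \<in> D" by (rule Phi_zero_D)
  qed
  finally show ?thesis .
qed

lemma brk_D_right: assumes u: "Phi k u x" and d: "d \<in> D" shows "brk U u d \<in> D"
proof -
  obtain S where S: "finite S" "S \<subseteq> {1..}" "d = fs U (\<lambda>k. UU.proj k d) S"
    "\<And>m. m \<in> S \<Longrightarrow> Phi m (UU.proj m d) (zero G)" using D_decomp[OF d] by metis
  have uc: "u \<in> carrier U" and xc: "x \<in> carrier G" using Phi_c u by auto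
  have pc: "\<And>m. m \<in> S \<Longrightarrow> UU.proj m d \<in> carrier U" using S(4) Phi_c by blast
  have "brk U u d = fs U (\<lambda>m. brk U u (UU.proj m d)) S"
    by (subst S(3), rule UU.brk_fs_r) (use pc uc in auto)
  also have "\<dots> \<in> D"
  proof (rule UU.fs_closed_sub[OF D_sub])
    fix m assume m: "m \<in> S"
    have "Phi (k + m) (brk U u (UU.proj m d)) (brk G x (zero G))" using HL[OF u S(4)[OF m]] .
    then have "Phi (k + m) (brk U u (UU.proj m d)) (zero G)" using xc by simp
    then show "brk U u (UU.proj m d) \<in> D" by (rule Phi_zero_D)
  qed
  finally show ?thesis .
qed

lemma brk_D_D: assumes "d \<in> D" "d' \<in> D" shows "brk U d d' \<in> D"
proof -
  have dP: "d \<in> PU" "d' \<in> PU" using D_PU assms by auto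
  have z: "\<pi> d = zero G" "\<pi> d' = zero G" using assms unfolding D_def by auto
  have "brk U d d' \<in> PU" using UU.pos_brk dP by blast
  moreover have "\<pi> (brk U d d') = brk G (\<pi> d) (\<pi> d')" using \<pi>_brk dP by blast
  moreover have "brk G (zero G) (zero G) = zero G" by simp
  ultimately show ?thesis unfolding D_def using z by simp
qed

lemma Phi_N: assumes "Phi k u x" shows "u \<in> N"
  unfolding N_def idealiser_def using Phi_c(1)[OF assms] brk_D_right[OF assms] by blast

lemma N_sub: "subspace U N"
  unfolding subspace_def N_def idealiser_def
proof (intro conjI ballI allI)
  show "{x \<in> carrier U. \<forall>d\<in>D. brk U x d \<in> D} \<subseteq> carrier U" by blast
  show "zero U \<in> {x \<in> carrier U. \<forall>d\<in>D. brk U x d \<in> D}"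
    using D_c UU.subspace_zero[OF D_sub] by simp
  show "add U x y \<in> {x \<in> carrier U. \<forall>d\<in>D. brk U x d \<in> D}"
    if "x \<in> {x \<in> carrier U. \<forall>d\<in>D. brk U x d \<in> D}" "y \<in> {x \<in> carrier U. \<forall>d\<in>D. brk U x d \<in> D}" for x y
    using that D_c UU.brk_add_l UU.subspace_add[OF D_sub] by simp
  show "scal U c x \<in> {x \<in> carrier U. \<forall>d\<in>D. brk U x d \<in> D}"
    if "x \<in> {x \<in> carrier U. \<forall>d\<in>D. brk U x d \<in> D}" for c x
    using that D_c UU.brk_scal_l UU.subspace_scal[OF D_sub] by simp
qed

end

context setting begin

definition eqD :: "'u \<Rightarrow> 'u \<Rightarrow> bool" where
  "eqD u v \<longleftrightarrow> u \<in> carrier U \<and> v \<in> carrier U \<and> add U u (neg U v) \<in> D"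

lemma eqD_c: "eqD u v \<Longrightarrow> u \<in> carrier U" "eqD u v \<Longrightarrow> v \<in> carrier U"
  unfolding eqD_def by auto

lemma eqD_refl: "u \<in> carrier U \<Longrightarrow> eqD u u"
  unfolding eqD_def using UU.add_neg UU.subspace_zero[OF D_sub] by simp

lemma eqD_sym: assumes "eqD u v" shows "eqD v u"
proof -
  have c: "u \<in> carrier U" "v \<in> carrier U" "add U u (neg U v) \<in> D" using assms unfolding eqD_def by auto
  have "neg U (add U u (neg U v)) \<in> D" using UU.subspace_neg[OF D_sub c(3)] .
  then show ?thesis unfolding eqD_def using UU.neg_sub[OF c(1,2)] c by simp
qed

lemma eqD_trans: assumes "eqD u v" "eqD v w" shows "eqD u w"
proof -
  have c: "u \<in> carrier U" "v \<in> carrier U" "w \<in> carrier U" "add U u (neg U v) \<in> D" "add U v (neg U w) \<in> D"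
    using assms unfolding eqD_def by auto
  have "add U (add U u (neg U v)) (add U v (neg U w)) \<in> D" using UU.subspace_add[OF D_sub c(4,5)] .
  then show ?thesis unfolding eqD_def using UU.sub_sub[OF c(1,2,3)] c by simp
qed

lemma eqD_add: assumes "eqD u u'" "eqD v v'" shows "eqD (add U u v) (add U u' v')"
proof -
  have c: "u \<in> carrier U" "v \<in> carrier U" "u' \<in> carrier U" "v' \<in> carrier U"
    "add U u (neg U u') \<in> D" "add U v (neg U v') \<in> D"
    using assms unfolding eqD_def by auto
  have "add U (add U u (neg U u')) (add U v (neg U v')) \<in> D" using UU.subspace_add[OF D_sub c(5,6)] .
  then show ?thesis unfolding eqD_def using UU.sub_add[OF c(1-4)] c by simp
qed

lemma eqD_scal: assumes "eqD u v" shows "eqD (scal U c u) (scal U c v)"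
proof -
  have cc: "u \<in> carrier U" "v \<in> carrier U" "add U u (neg U v) \<in> D" using assms unfolding eqD_def by auto
  have "scal U c (add U u (neg U v)) \<in> D" using UU.subspace_scal[OF D_sub cc(3)] .
  then show ?thesis unfolding eqD_def using UU.scal_sub[OF cc(1,2)] cc by simp
qed

lemma eqD_fs: assumes "\<And>i. i \<in> S \<Longrightarrow> eqD (f i) (g i)" shows "eqD (fs U f S) (fs U g S)"
  using assms
proof (induct S rule: infinite_finite_induct)
  case (infinite S) then show ?case using eqD_refl by simp
next
  case empty then show ?case using eqD_refl by simp
next
  case (insert i S)
  have fc: "\<And>j. j \<in> insert i S \<Longrightarrow> f j \<in> carrier U" and gc: "\<And>j. j \<in> insert i S \<Longrightarrow> g j \<in> carrier U"
    using insert(4) eqD_c by blast+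
  have "eqD (add U (f i) (fs U f S)) (add U (g i) (fs U g S))"
    by (rule eqD_add) (use insert in auto)
  then show ?case using UU.fs_insert[OF insert(1,2) fc] UU.fs_insert[OF insert(1,2) gc] by simp
qed

lemma eqD_D: assumes "u \<in> carrier U" "d \<in> D" shows "eqD (add U u d) u"
  unfolding eqD_def using assms D_c UU.add_sub_cancel by simp

lemma eqD_obtain: assumes "eqD a u" obtains d where "d \<in> D" "a = add U u d"
proof -
  have c: "a \<in> carrier U" "u \<in> carrier U" "add U a (neg U u) \<in> D" using assms unfolding eqD_def by auto
  have "a = add U u (add U a (neg U u))" using UU.sub_add_cancel[OF c(2,1)] by simp
  then show ?thesis using that c(3) by blast
qed

lemma eqD_zero_D: "eqD u (zero U) \<Longrightarrow> u \<in> D"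
  unfolding eqD_def by auto

lemma Phi_eqD: assumes "Phi n u x" "Phi n v x" shows "eqD u v"
proof -
  have "Phi n (add U u (scal U (-1) v)) (add G x (scal G (-1) x))"
    by (rule Phi_add[OF assms(1) Phi_scal[OF assms(2)]])
  moreover have "add G x (scal G (-1) x) = zero G" using GG.add_neg[of x] Phi_c assms by (simp add: neg_def)
  ultimately have "add U u (neg U v) \<in> D" using Phi_zero_D by (simp add: neg_def)
  then show ?thesis unfolding eqD_def using Phi_c assms by simp
qed

lemma eqD_brk: assumes a: "eqD a u" and b: "eqD b v" and uN: "u \<in> N"
  and vD: "\<And>d. d \<in> D \<Longrightarrow> brk U d v \<in> D"
  shows "eqD (brk U a b) (brk U u v)"
proof -
  obtain d1 where d1: "d1 \<in> D" "a = add U u d1" using eqD_obtain[OF a] by blast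
  obtain d2 where d2: "d2 \<in> D" "b = add U v d2" using eqD_obtain[OF b] by blast
  have c: "u \<in> carrier U" "v \<in> carrier U" "d1 \<in> carrier U" "d2 \<in> carrier U"
    using eqD_c a b D_c d1 d2 by auto
  have ud2: "brk U u d2 \<in> D" using uN d2 unfolding N_def idealiser_def by blast
  have d1v: "brk U d1 v \<in> D" using vD d1 by blast
  have d12: "brk U d1 d2 \<in> D" using brk_D_D d1 d2 by blast
  have "brk U a b = add U (add U (brk U u v) (brk U d1 v)) (add U (brk U u d2) (brk U d1 d2))"
    unfolding d1(2) d2(2) using c by (simp add: UU.brk_add_l UU.brk_add_r)
  also have "\<dots> = add U (brk U u v) (add U (brk U d1 v) (add U (brk U u d2) (brk U d1 d2)))"
    using c by (simp add: UU.add_assoc)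
  finally have e: "brk U a b = add U (brk U u v) (add U (brk U d1 v) (add U (brk U u d2) (brk U d1 d2)))" .
  have "add U (brk U d1 v) (add U (brk U u d2) (brk U d1 d2)) \<in> D"
    using UU.subspace_add[OF D_sub] ud2 d1v d12 by blast
  then show ?thesis unfolding e using eqD_D c by simp
qed

definition suppG :: "'g \<Rightarrow> int set" where "suppG x = {k. GG.proj k x \<noteq> zero G}"

definition Psi :: "'g \<Rightarrow> 'u" where
  "Psi x = fs U (\<lambda>k. rho k (GG.proj k x)) (suppG x)"

lemma supp_fin: assumes "x \<in> carrier G" shows "finite (suppG x)"
proof -
  obtain S where S: "finite S" "x = fs G (\<lambda>k. GG.proj k x) S" "\<And>k. k \<notin> S \<Longrightarrow> GG.proj k x = zero G"
    using GG.decomp[OF assms] by metis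
  have "suppG x \<subseteq> S" unfolding suppG_def using S(3) by blast
  then show ?thesis using S(1) finite_subset by blast
qed

lemma Phi_term: "x \<in> carrier G \<Longrightarrow> Phi k (rho k (GG.proj k x)) (GG.proj k x)"
  using Phi_rho GG.proj_grd by blast

lemma Psi_T: assumes x: "x \<in> carrier G" and T: "finite T" "suppG x \<subseteq> T"
  shows "Psi x = fs U (\<lambda>k. rho k (GG.proj k x)) T"
  unfolding Psi_def
proof (rule UU.fs_mono[OF T(1) T(2)])
  show "\<And>i. i \<in> T - suppG x \<Longrightarrow> rho i (GG.proj i x) = zero U" unfolding suppG_def by simp
  show "\<And>i. i \<in> T \<Longrightarrow> rho i (GG.proj i x) \<in> carrier U" using Phi_term[OF x] Phi_c by blast
qed

lemma Psi_hom: assumes "x \<in> grd G k" shows "Psi x = rho k x"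
proof -
  have xc: "x \<in> carrier G" using assms GG.grd_c by blast
  have "suppG x \<subseteq> {k}" unfolding suppG_def using GG.proj_hom[OF assms] by auto
  then have "Psi x = fs U (\<lambda>k. rho k (GG.proj k x)) {k}" using Psi_T[OF xc] by simp
  also have "\<dots> = rho k (GG.proj k x)" using Phi_c(1)[OF Phi_term[OF xc]] by simp
  also have "\<dots> = rho k x" using GG.proj_hom[OF assms] by simp
  finally show ?thesis .
qed

lemma Psi_c: "x \<in> carrier G \<Longrightarrow> Psi x \<in> carrier U"
  unfolding Psi_def by (rule UU.fs_c) (use Phi_term Phi_c in blast)

lemma Psi_N: "x \<in> carrier G \<Longrightarrow> Psi x \<in> N"
  unfolding Psi_def by (rule UU.fs_closed_sub[OF N_sub]) (use Phi_term Phi_N in blast)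

lemma D_brk_Psi: assumes d: "d \<in> D" and x: "x \<in> carrier G" shows "brk U d (Psi x) \<in> D"
proof -
  have "brk U d (Psi x) = fs U (\<lambda>k. brk U d (rho k (GG.proj k x))) (suppG x)"
    unfolding Psi_def by (rule UU.brk_fs_r) (use Phi_term[OF x] Phi_c D_c[OF d] in blast)+
  also have "\<dots> \<in> D"
    by (rule UU.fs_closed_sub[OF D_sub]) (use brk_D_left[OF d Phi_term[OF x]] in blast)
  finally show ?thesis .
qed

lemma Psi_add: assumes x: "x \<in> carrier G" and y: "y \<in> carrier G"
  shows "eqD (Psi (add G x y)) (add U (Psi x) (Psi y))"
proof -
  have xy: "add G x y \<in> carrier G" using x y by simp
  define T where "T = suppG x \<union> suppG y \<union> suppG (add G x y)"
  have T: "finite T" using supp_fin x y xy unfolding T_def by blast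
  have "Psi (add G x y) = fs U (\<lambda>k. rho k (GG.proj k (add G x y))) T" by (rule Psi_T[OF xy T]) (auto simp: T_def)
  moreover have "Psi x = fs U (\<lambda>k. rho k (GG.proj k x)) T" by (rule Psi_T[OF x T]) (auto simp: T_def)
  moreover have "Psi y = fs U (\<lambda>k. rho k (GG.proj k y)) T" by (rule Psi_T[OF y T]) (auto simp: T_def)
  moreover have "add U (fs U (\<lambda>k. rho k (GG.proj k x)) T) (fs U (\<lambda>k. rho k (GG.proj k y)) T)
      = fs U (\<lambda>k. add U (rho k (GG.proj k x)) (rho k (GG.proj k y))) T"
    by (rule UU.fs_add[symmetric]) (use Phi_term Phi_c x y in blast)+
  moreover have "eqD (fs U (\<lambda>k. rho k (GG.proj k (add G x y))) T)
      (fs U (\<lambda>k. add U (rho k (GG.proj k x)) (rho k (GG.proj k y))) T)"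
  proof (rule eqD_fs)
    fix k
    have "Phi k (add U (rho k (GG.proj k x)) (rho k (GG.proj k y))) (add G (GG.proj k x) (GG.proj k y))"
      by (rule Phi_add[OF Phi_term[OF x] Phi_term[OF y]])
    moreover have "GG.proj k (add G x y) = add G (GG.proj k x) (GG.proj k y)" using GG.proj_add x y by blast
    ultimately show "eqD (rho k (GG.proj k (add G x y))) (add U (rho k (GG.proj k x)) (rho k (GG.proj k y)))"
      using Phi_eqD Phi_term[OF xy] by metis
  qed
  ultimately show ?thesis by simp
qed

lemma Psi_scal: assumes x: "x \<in> carrier G"
  shows "eqD (Psi (scal G c x)) (scal U c (Psi x))"
proof -
  have xy: "scal G c x \<in> carrier G" using x by simp
  define T where "T = suppG x \<union> suppG (scal G c x)"
  have T: "finite T" using supp_fin x xy unfolding T_def by blast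
  have "Psi (scal G c x) = fs U (\<lambda>k. rho k (GG.proj k (scal G c x))) T" by (rule Psi_T[OF xy T]) (auto simp: T_def)
  moreover have "Psi x = fs U (\<lambda>k. rho k (GG.proj k x)) T" by (rule Psi_T[OF x T]) (auto simp: T_def)
  moreover have "scal U c (fs U (\<lambda>k. rho k (GG.proj k x)) T) = fs U (\<lambda>k. scal U c (rho k (GG.proj k x))) T"
    by (rule UU.fs_scal) (use Phi_term Phi_c x in blast)
  moreover have "eqD (fs U (\<lambda>k. rho k (GG.proj k (scal G c x))) T)
      (fs U (\<lambda>k. scal U c (rho k (GG.proj k x))) T)"
  proof (rule eqD_fs)
    fix k
    have "Phi k (scal U c (rho k (GG.proj k x))) (scal G c (GG.proj k x))"
      by (rule Phi_scal[OF Phi_term[OF x]])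
    moreover have "GG.proj k (scal G c x) = scal G c (GG.proj k x)" using GG.proj_scal x by blast
    ultimately show "eqD (rho k (GG.proj k (scal G c x))) (scal U c (rho k (GG.proj k x)))"
      using Phi_eqD Phi_term[OF xy] by metis
  qed
  ultimately show ?thesis by simp
qed

lemma Psi_zero: "Psi (zero G) = zero U"
  unfolding Psi_def suppG_def by simp

lemma Psi_fs: assumes "\<And>i. i \<in> S \<Longrightarrow> h i \<in> carrier G"
  shows "eqD (Psi (fs G h S)) (fs U (\<lambda>i. Psi (h i)) S)"
  using assms
proof (induct S rule: infinite_finite_induct)
  case (infinite S) then show ?case using eqD_refl Psi_zero by simp
next
  case empty then show ?case using eqD_refl Psi_zero by simp
next
  case (insert i S)
  have hc: "\<And>j. j \<in> insert i S \<Longrightarrow> h j \<in> carrier G" using insert by blast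
  have pc: "\<And>j. j \<in> insert i S \<Longrightarrow> Psi (h j) \<in> carrier U" using hc Psi_c by blast
  have fsc: "fs G h S \<in> carrier G" by (rule GG.fs_c) (use hc in blast)
  have "eqD (Psi (add G (h i) (fs G h S))) (add U (Psi (h i)) (Psi (fs G h S)))"
    by (rule Psi_add) (use hc fsc in auto)
  moreover have "eqD (add U (Psi (h i)) (Psi (fs G h S))) (add U (Psi (h i)) (fs U (\<lambda>i. Psi (h i)) S))"
    by (rule eqD_add[OF eqD_refl]) (use pc insert in auto)
  ultimately have "eqD (Psi (add G (h i) (fs G h S))) (add U (Psi (h i)) (fs U (\<lambda>i. Psi (h i)) S))"
    using eqD_trans by blast
  then show ?case using GG.fs_insert[OF insert(1,2) hc] UU.fs_insert[OF insert(1,2) pc] by simp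
qed

end

context setting begin

lemma PI_aux: "nat (- k) = M \<Longrightarrow> k \<le> 0 \<Longrightarrow> x \<in> grd G k \<Longrightarrow> rho k x = zero U \<Longrightarrow> x = zero G"
proof (induct M arbitrary: k x rule: less_induct)
  case (less M k x)
  note M = less(2) and k = less(3) and x = less(4) and r = less(5)
  have xc: "x \<in> carrier G" using x GG.grd_c by blast
  have P0: "Phi k (zero U) x" using Phi_rho[OF x] r by simp
  have kill: "brk G x g = zero G" if m: "1 \<le> m" and g: "g \<in> grd G m" for m g
  proof -
    obtain b where b: "b \<in> grd U m" "\<pi> b = g" using \<pi>_surj[OF m g] by blast
    have Pb: "Phi m b g" using Phi_pos[OF m b(1)] b(2) by simp
    have "Phi (k + m) (brk U (zero U) b) (brk G x g)" by (rule HL[OF P0 Pb])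
    then have P: "Phi (k + m) (zero U) (brk G x g)" using b(1) UU.grd_c by simp
    have xg: "brk G x g \<in> grd G (k + m)" using GG.brk_grd[OF x g] .
    show ?thesis
    proof (cases "1 \<le> k + m")
      case True
      then show ?thesis using P unfolding Phi_def by simp
    next
      case False
      then have "zero U = rho (k + m) (brk G x g)" using P unfolding Phi_def by simp
      moreover have "nat (- (k + m)) < M" using M m False by auto
      ultimately show ?thesis using less(1)[OF _ refl _ xg] False by auto
    qed
  qed
  have "x \<in> (\<Union>k\<in>{..0}. grd G k)" by (rule UN_I[of k]) (use x k in simp_all)
  then have xn: "x \<in> nonpos_part G" unfolding nonpos_part_def by (rule GG.span_sup[THEN subsetD])
  moreover have "\<forall>y\<in>carrier (pos_part G). brk G y x = zero G"
  proof
    fix y assume "y \<in> carrier (pos_part G)"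
    then have y: "y \<in> PG" by simp
    obtain S where S: "finite S" "S \<subseteq> {1..}" "y = fs G (\<lambda>k. GG.proj k y) S"
        "\<And>k. k \<notin> S \<Longrightarrow> GG.proj k y = zero G"
      using GG.pos_decomp[OF y] by metis
    have yc: "y \<in> carrier G" using y PG_c by blast
    have "brk G y x = fs G (\<lambda>m. brk G (GG.proj m y) x) S"
      by (subst S(3), rule GG.brk_fs_l) (use yc xc in auto)
    also have "\<dots> = zero G"
    proof (rule GG.fs_zero)
      fix m assume m: "m \<in> S"
      have m1: "1 \<le> m" using m S(2) by auto
      have pg: "GG.proj m y \<in> grd G m" using GG.proj_grd yc by blast
      have "brk G (GG.proj m y) x = scal G (- ssign m k) (brk G x (GG.proj m y))" using GG.anti[OF pg x] .
      also have "\<dots> = zero G" using kill[OF m1 pg] by simp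
      finally show "brk G (GG.proj m y) x = zero G" .
    qed
    finally show "brk G y x = zero G" .
  qed
  moreover have "\<forall>x\<in>nonpos_part G. (\<forall>y\<in>carrier (pos_part G). brk G y x = zero G) \<longrightarrow> x = zero G"
    using G_trans unfolding pos_0_transitive_def .
  ultimately show ?case using xn by blast
qed

lemma PI: "k \<le> 0 \<Longrightarrow> x \<in> grd G k \<Longrightarrow> rho k x = zero U \<Longrightarrow> x = zero G"
  using PI_aux by blast

lemma Psi_proj: assumes z: "z \<in> carrier G" shows "UU.proj k (Psi z) = rho k (GG.proj k z)"
proof -
  have g: "\<forall>j\<in>suppG z. rho j (GG.proj j z) \<in> grd U j" using Phi_term[OF z] Phi_grd by blast
  have "UU.proj k (Psi z) = (if k \<in> suppG z then rho k (GG.proj k z) else zero U)"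
    unfolding Psi_def by (rule UU.proj_fs[OF supp_fin[OF z] g])
  then show ?thesis unfolding suppG_def by auto
qed

lemma Psi_inj0: assumes z: "z \<in> carrier G" and D: "Psi z \<in> D" shows "z = zero G"
proof (rule GG.eq_by_proj[OF z GG.zero_c])
  fix k
  have PP: "Psi z \<in> PU" and pz: "\<pi> (Psi z) = zero G" using D unfolding D_def by auto
  have Pt: "Phi k (rho k (GG.proj k z)) (GG.proj k z)" by (rule Phi_term[OF z])
  show "GG.proj k z = GG.proj k (zero G)"
  proof (cases "1 \<le> k")
    case True
    have "\<pi> (UU.proj k (Psi z)) = GG.proj k (\<pi> (Psi z))" using \<pi>_proj[OF PP True] by simp
    also have "\<dots> = zero G" using pz by simp
    finally have "\<pi> (rho k (GG.proj k z)) = zero G" using Psi_proj[OF z] by simp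
    moreover have "\<pi> (rho k (GG.proj k z)) = GG.proj k z" using Pt True unfolding Phi_def by simp
    ultimately show ?thesis by simp
  next
    case False
    have "UU.proj k (Psi z) = zero U" using PP UU.pos_char[THEN iffD1, OF PP] False by simp
    then have "rho k (GG.proj k z) = zero U" using Psi_proj[OF z] by simp
    then show ?thesis using PI[of k "GG.proj k z"] False GG.proj_grd[OF z] by simp
  qed
qed

lemma Psi_brk: assumes x: "x \<in> carrier G" and y: "y \<in> carrier G"
  shows "eqD (Psi (brk G x y)) (brk U (Psi x) (Psi y))"
proof -
  define S where "S = suppG x"
  define T where "T = suppG y"
  have S: "finite S" and T: "finite T" using supp_fin x y unfolding S_def T_def by auto
  define xi where "xi i = GG.proj i x" for i
  define yj where "yj j = GG.proj j y" for j
  have xig: "xi i \<in> grd G i" and yjg: "yj j \<in> grd G j" for i j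
    unfolding xi_def yj_def using GG.proj_grd x y by auto
  have xic: "xi i \<in> carrier G" and yjc: "yj j \<in> carrier G" for i j using xig yjg GG.grd_c by auto
  have xs: "x = fs G xi S" unfolding xi_def S_def by (rule GG.decomp_super[OF x supp_fin[OF x]]) (simp add: suppG_def)
  have ys: "y = fs G yj T" unfolding yj_def T_def by (rule GG.decomp_super[OF y supp_fin[OF y]]) (simp add: suppG_def)
  have bxy: "brk G x y = fs G (\<lambda>i. fs G (\<lambda>j. brk G (xi i) (yj j)) T) S"
  proof -
    have "brk G x y = fs G (\<lambda>i. brk G (xi i) y) S"
      by (subst xs, rule GG.brk_fs_l) (use xic y in auto)
    also have "\<dots> = fs G (\<lambda>i. fs G (\<lambda>j. brk G (xi i) (yj j)) T) S"
    proof (rule GG.fs_cong[OF refl])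
      fix i
      show "fs G (\<lambda>j. brk G (xi i) (yj j)) T \<in> carrier G" by (rule GG.fs_c) (use xic yjc in simp)
      show "brk G (xi i) y = fs G (\<lambda>j. brk G (xi i) (yj j)) T"
        by (subst ys, rule GG.brk_fs_r) (use xic yjc in auto)
    qed
    finally show ?thesis .
  qed
  have inner_c: "fs G (\<lambda>j. brk G (xi i) (yj j)) T \<in> carrier G" for i by (rule GG.fs_c) (use xic yjc in simp)
  have e1: "eqD (Psi (brk G x y)) (fs U (\<lambda>i. Psi (fs G (\<lambda>j. brk G (xi i) (yj j)) T)) S)"
    unfolding bxy by (rule Psi_fs) (use inner_c in blast)
  have e2: "eqD (fs U (\<lambda>i. Psi (fs G (\<lambda>j. brk G (xi i) (yj j)) T)) S)
      (fs U (\<lambda>i. fs U (\<lambda>j. Psi (brk G (xi i) (yj j))) T) S)"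
    by (rule eqD_fs, rule Psi_fs) (use xic yjc in simp)
  have e3: "eqD (fs U (\<lambda>i. fs U (\<lambda>j. Psi (brk G (xi i) (yj j))) T) S)
      (fs U (\<lambda>i. fs U (\<lambda>j. brk U (rho i (xi i)) (rho j (yj j))) T) S)"
  proof (rule eqD_fs, rule eqD_fs)
    fix i j
    have g: "brk G (xi i) (yj j) \<in> grd G (i + j)" using GG.brk_grd xig yjg by blast
    have "Phi (i + j) (brk U (rho i (xi i)) (rho j (yj j))) (brk G (xi i) (yj j))"
      by (rule HL[OF Phi_rho[OF xig] Phi_rho[OF yjg]])
    moreover have "Psi (brk G (xi i) (yj j)) = rho (i + j) (brk G (xi i) (yj j))" by (rule Psi_hom[OF g])
    ultimately show "eqD (Psi (brk G (xi i) (yj j))) (brk U (rho i (xi i)) (rho j (yj j)))"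
      using Phi_eqD Phi_rho[OF g] by metis
  qed
  have rc: "rho i (xi i) \<in> carrier U" "rho j (yj j) \<in> carrier U" for i j
    using Phi_c(1)[OF Phi_rho[OF xig]] Phi_c(1)[OF Phi_rho[OF yjg]] by auto
  have px: "Psi x = fs U (\<lambda>i. rho i (xi i)) S" unfolding Psi_def xi_def S_def ..
  have py: "Psi y = fs U (\<lambda>j. rho j (yj j)) T" unfolding Psi_def yj_def T_def ..
  have e4: "brk U (Psi x) (Psi y) = fs U (\<lambda>i. fs U (\<lambda>j. brk U (rho i (xi i)) (rho j (yj j))) T) S"
  proof -
    have "brk U (Psi x) (Psi y) = fs U (\<lambda>i. brk U (rho i (xi i)) (Psi y)) S"
      unfolding px by (rule UU.brk_fs_l) (use rc Psi_c[OF y] in auto)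
    also have "\<dots> = fs U (\<lambda>i. fs U (\<lambda>j. brk U (rho i (xi i)) (rho j (yj j))) T) S"
    proof (rule UU.fs_cong[OF refl])
      fix i
      show "fs U (\<lambda>j. brk U (rho i (xi i)) (rho j (yj j))) T \<in> carrier U" by (rule UU.fs_c) (use rc in simp)
      show "brk U (rho i (xi i)) (Psi y) = fs U (\<lambda>j. brk U (rho i (xi i)) (rho j (yj j))) T"
        unfolding py by (rule UU.brk_fs_r) (use rc in auto)
    qed
    finally show ?thesis .
  qed
  show ?thesis unfolding e4 using eqD_trans[OF e1 eqD_trans[OF e2 e3]] .
qed

end

context vsp begin
lemma coset_aux: assumes "v \<in> carrier L" "d0 \<in> carrier L" "d \<in> carrier L"
  shows "add L (add L v d0) (add L d (neg L d0)) = add L v d"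
  using assms by (simp add: add_assoc sub_add_cancel)
end

context setting begin

lemma coset_eq: assumes "eqD u v" shows "coset U D u = coset U D v"
proof -
  obtain d0 where d0: "d0 \<in> D" "u = add U v d0" using eqD_obtain[OF assms] by blast
  have c: "u \<in> carrier U" "v \<in> carrier U" "d0 \<in> carrier U" using assms eqD_c D_c d0 by auto
  show ?thesis unfolding coset_def
  proof (rule equalityI; rule subsetI)
    fix a assume "a \<in> {add U u d |d. d \<in> D}"
    then obtain d where d: "d \<in> D" "a = add U u d" by blast
    have "a = add U v (add U d0 d)" using d c D_c by (simp add: d0(2) UU.add_assoc)
    moreover have "add U d0 d \<in> D" using UU.subspace_add[OF D_sub d0(1) d(1)] .
    ultimately show "a \<in> {add U v d |d. d \<in> D}" by blast
  next
    fix a assume "a \<in> {add U v d |d. d \<in> D}"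
    then obtain d where d: "d \<in> D" "a = add U v d" by blast
    have "a = add U u (add U d (neg U d0))" using d c D_c UU.coset_aux by (simp add: d0(2))
    moreover have "add U d (neg U d0) \<in> D" using UU.subspace_add[OF D_sub d(1) UU.subspace_neg[OF D_sub d0(1)]] .
    ultimately show "a \<in> {add U u d |d. d \<in> D}" by blast
  qed
qed

lemma self_coset: assumes "u \<in> carrier U" shows "u \<in> coset U D u"
proof -
  have "u = add U u (zero U)" using assms by simp
  moreover have "zero U \<in> D" by (rule UU.subspace_zero[OF D_sub])
  ultimately show ?thesis unfolding coset_def by blast
qed

lemma coset_eqD: assumes "coset U D u = coset U D v" "u \<in> carrier U" "v \<in> carrier U" shows "eqD u v"
proof -
  have "u \<in> coset U D u" by (rule self_coset[OF assms(2)])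
  then have "u \<in> coset U D v" using assms(1) by simp
  then obtain d where d: "d \<in> D" "u = add U v d" unfolding coset_def by blast
  then show ?thesis using eqD_D[OF assms(3) d(1)] by simp
qed

lemma some_coset: assumes "u \<in> carrier U" shows "eqD (SOME a. a \<in> coset U D u) u"
proof -
  have "u \<in> coset U D u" by (rule self_coset[OF assms])
  then have "(SOME a. a \<in> coset U D u) \<in> coset U D u" by (rule someI)
  then obtain d where d: "d \<in> D" "(SOME a. a \<in> coset U D u) = add U u d" unfolding coset_def by blast
  then show ?thesis using eqD_D[OF assms d(1)] by simp
qed

lemma quot_simps: "carrier (quot U N D) = coset U D ` N"
  "add (quot U N D) A B = coset U D (add U (SOME a. a \<in> A) (SOME b. b \<in> B))"
  "scal (quot U N D) c A = coset U D (scal U c (SOME a. a \<in> A))"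
  "brk (quot U N D) A B = coset U D (brk U (SOME a. a \<in> A) (SOME b. b \<in> B))"
  "grd (quot U N D) k = coset U D ` (N \<inter> grd U k)"
  by (simp_all add: quot_def)

lemma main: "\<exists>\<phi>. lsa_hom G (quot U N D) \<phi> \<and> inj_on \<phi> (carrier G)"
proof (intro exI conjI)
  let ?\<phi> = "\<lambda>x. coset U D (Psi x)"
  show "lsa_hom G (quot U N D) ?\<phi>"
    unfolding lsa_hom_def lin_map_def quot_simps
  proof (intro conjI ballI allI)
    show "coset U D (Psi x) \<in> coset U D ` N" if "x \<in> carrier G" for x using Psi_N[OF that] by blast
    show "coset U D (Psi (add G x y)) = coset U D (add U (SOME a. a \<in> coset U D (Psi x)) (SOME b. b \<in> coset U D (Psi y)))"
      if x: "x \<in> carrier G" and y: "y \<in> carrier G" for x y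
    proof (rule coset_eq)
      have "eqD (add U (Psi x) (Psi y)) (add U (SOME a. a \<in> coset U D (Psi x)) (SOME b. b \<in> coset U D (Psi y)))"
        by (rule eqD_add[OF eqD_sym[OF some_coset] eqD_sym[OF some_coset]]) (use Psi_c x y in auto)
      then show "eqD (Psi (add G x y)) (add U (SOME a. a \<in> coset U D (Psi x)) (SOME b. b \<in> coset U D (Psi y)))"
        using eqD_trans[OF Psi_add[OF x y]] by blast
    qed
    show "coset U D (Psi (scal G c x)) = coset U D (scal U c (SOME a. a \<in> coset U D (Psi x)))"
      if x: "x \<in> carrier G" for c x
    proof (rule coset_eq)
      have "eqD (scal U c (Psi x)) (scal U c (SOME a. a \<in> coset U D (Psi x)))"
        by (rule eqD_scal[OF eqD_sym[OF some_coset]]) (use Psi_c x in auto)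
      then show "eqD (Psi (scal G c x)) (scal U c (SOME a. a \<in> coset U D (Psi x)))"
        using eqD_trans[OF Psi_scal[OF x]] by blast
    qed
    show "coset U D (Psi x) \<in> coset U D ` (N \<inter> grd U k)" if x: "x \<in> grd G k" for k x
    proof -
      have e: "Psi x = rho k x" by (rule Psi_hom[OF x])
      have r: "rho k x \<in> N \<inter> grd U k" using Phi_N[OF Phi_rho[OF x]] Phi_grd(1)[OF Phi_rho[OF x]] by (rule IntI)
      show ?thesis unfolding e by (rule imageI[OF r])
    qed
    show "coset U D (Psi (brk G x y)) = coset U D (brk U (SOME a. a \<in> coset U D (Psi x)) (SOME b. b \<in> coset U D (Psi y)))"
      if x: "x \<in> carrier G" and y: "y \<in> carrier G" for x y
    proof (rule coset_eq)
      have "eqD (brk U (SOME a. a \<in> coset U D (Psi x)) (SOME b. b \<in> coset U D (Psi y))) (brk U (Psi x) (Psi y))"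
        by (rule eqD_brk[OF some_coset some_coset Psi_N[OF x]])
           (use Psi_c x y D_brk_Psi in auto)
      then show "eqD (Psi (brk G x y)) (brk U (SOME a. a \<in> coset U D (Psi x)) (SOME b. b \<in> coset U D (Psi y)))"
        using eqD_trans[OF Psi_brk[OF x y] eqD_sym] by blast
    qed
  qed
  show "inj_on ?\<phi> (carrier G)"
  proof (rule inj_onI)
    fix x y assume x: "x \<in> carrier G" and y: "y \<in> carrier G" and eq: "coset U D (Psi x) = coset U D (Psi y)"
    have e: "eqD (Psi x) (Psi y)" by (rule coset_eqD[OF eq Psi_c[OF x] Psi_c[OF y]])
    define z where "z = add G x (neg G y)"
    have yn: "neg G y \<in> carrier G" using y by simp
    have z: "z \<in> carrier G" unfolding z_def using x yn by simp
    have e1: "eqD (Psi z) (add U (Psi x) (Psi (neg G y)))" unfolding z_def by (rule Psi_add[OF x yn])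
    have e2: "eqD (Psi (neg G y)) (neg U (Psi y))" unfolding neg_def by (rule Psi_scal[OF y])
    have e3: "eqD (add U (Psi x) (Psi (neg G y))) (add U (Psi x) (neg U (Psi y)))"
      by (rule eqD_add[OF eqD_refl[OF Psi_c[OF x]] e2])
    have e4: "eqD (add U (Psi x) (neg U (Psi y))) (zero U)"
      using e Psi_c x y unfolding eqD_def by simp
    have "Psi z \<in> D" using eqD_zero_D eqD_trans[OF e1 eqD_trans[OF e3 e4]] by blast
    then have "z = zero G" by (rule Psi_inj0[OF z])
    then show "x = y" using GG.add_neg_eq_zero[OF x y] unfolding z_def by simp
  qed
qed

end

theorem proposition3p9:
  fixes G :: "('k::field_char_0, 'g) lsa"
    and U :: "('k, 'u) lsa"
    and \<iota> :: "'g \<Rightarrow> 'u"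
    and \<pi> :: "'u \<Rightarrow> 'g"
  assumes G_lsa: "lie_superalgebra G"
    and G_trans: "pos_0_transitive G"
    and G_gen: "lie_gen G (grd G 1) = carrier (pos_part G)"
    and U_univ: "universal_lsa U"
    and \<iota>_lin: "lin_map G U (grd G 1) (grd U 1) \<iota>"
    and \<iota>_bij: "bij_betw \<iota> (grd G 1) (grd U 1)"
    and \<pi>_hom: "lsa_hom (pos_part U) (pos_part G) \<pi>"
    and \<pi>_id: "\<forall>x\<in>grd G 1. \<pi> (\<iota> x) = x"
  shows "let D = {x \<in> carrier (pos_part U). \<pi> x = zero G};
             N = idealiser U D
         in \<exists>\<phi>. lsa_hom G (quot U N D) \<phi> \<and> inj_on \<phi> (carrier G)"
proof -
  interpret S: setting G U \<iota> \<pi>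
    by (rule setting.intro) (rule assms)+
  have D: "{x \<in> carrier (pos_part U). \<pi> x = zero G} = S.D" unfolding S.D_def by simp
  show ?thesis unfolding Let_def D S.N_def[symmetric] by (rule S.main)
qed


end
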